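(* Let $K\ge 2$, and let $\mathbf{z}_r$ and $\mathrm{OPT}\text{-}\mathbf{Q}^\star$ be as defined in the context. Let $\lambda_j^\star$ be the $j$-th eigenvalue of $\mathbf{Q}^\star$, with $\lambda_j^\star=0$ if $j>r^\star$, and define $\delta^\star=\min\{\min_{j\in[r-1]}|\lambda_j^\star-\lambda_{j+1}^\star|,\ \lambda_r^\star\}$. If $r\le r^\star$ and $\|\mathbf{H}\|_2\le\delta^\star/2$, then $$\left|\mathrm{OPT}\text{-}\mathbf{Q}^\star-\mathbf{z}_r^\dagger\mathbf{Q}^\star\mathbf{z}_r\right|\le O\!\left(n\left(\lambda_{r+1}^\star+\frac{\lambda_1^\star}{\delta^\star}\|\mathbf{H}\|_2\right)\right).$$
   Context: $\mathcal{A}_K=\{\exp(2\pi\mathrm{i}k/K):k=0,\dots,K-1\}$. $\mathbf{Q}^\star\in\mathbb{C}^{n\times n}$ is Hermitian positive semi-definite of rank $r^\star$, with eigendecomposition $\mathbf{Q}^\star=\sum_{i=1}^{r^\star}\lambda_i^\star\mathbf{u}_i^\star\mathbf{u}_i^{\star\dagger}$, $\lambda_1^\star\ge\lambda_2^\star\ge\dots$. $\mathbf{H}\in\mathbb{C}^{n\times n}$ is an arbitrary (not necessarily Hermitian) matrix and $\mathbf{Q}=\mathbf{Q}^\star+\mathbf{H}$. $\mathbf{Q}_r=\mathbf{V}_r\boldsymbol{\Sigma}_r\mathbf{V}_r^\dagger$, where $\boldsymbol{\Sigma}_r$ is the diagonal matrix of the top-$r$ singular values of $\mathbf{Q}$ and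 $\mathbf{V}_r$ the matrix of the corresponding top-$r$ left singular vectors. $\mathrm{OPT}\text{-}\mathbf{Q}^\star=\max_{\mathbf{z}\in\mathcal{A}_K^n}\mathbf{z}^\dagger\mathbf{Q}^\star\mathbf{z}$ and $\mathbf{z}_r$ attains $\max_{\mathbf{z}\in\mathcal{A}_K^n}\mathbf{z}^\dagger\mathbf{Q}_r\mathbf{z}$. $\|\cdot\|_2$ is the spectral norm; $O(\cdot)$ hides an absolute constant. *)

theory Defs
  imports "HOL-Analysis.Analysis"
begin

text \<open>Vectors in C^n are functions nat => complex (only indices < n matter);
n x n matrices are functions nat => nat => complex (only indices < n matter).\<close>

definition roots_of_unity :: "nat \<Rightarrow> complex set" where
  "roots_of_unity K = {cis (2 * pi * real k / real K) | k. k < K}"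

definition AKn :: "nat \<Rightarrow> nat \<Rightarrow> (nat \<Rightarrow> complex) set" where
  "AKn K n = {z. (\<forall>i<n. z i \<in> roots_of_unity K) \<and> (\<forall>i\<ge>n. z i = 0)}"

definition vnorm :: "nat \<Rightarrow> (nat \<Rightarrow> complex) \<Rightarrow> real" where
  "vnorm n x = sqrt (\<Sum>i<n. (cmod (x i))\<^sup>2)"

definition cinner :: "nat \<Rightarrow> (nat \<Rightarrow> complex) \<Rightarrow> (nat \<Rightarrow> complex) \<Rightarrow> complex" where
  "cinner n x y = (\<Sum>i<n. cnj (x i) * y i)"

definition mulv :: "nat \<Rightarrow> (nat \<Rightarrow> nat \<Rightarrow> complex) \<Rightarrow> (nat \<Rightarrow> complex) \<Rightarrow> (nat \<Rightarrow> complex)" where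
  "mulv n A x = (\<lambda>i. \<Sum>j<n. A i j * x j)"

definition spec_norm :: "nat \<Rightarrow> (nat \<Rightarrow> nat \<Rightarrow> complex) \<Rightarrow> real" where
  "spec_norm n A = Sup {vnorm n (mulv n A x) | x. vnorm n x = 1}"

definition qform :: "nat \<Rightarrow> (nat \<Rightarrow> nat \<Rightarrow> complex) \<Rightarrow> (nat \<Rightarrow> complex) \<Rightarrow> complex" where
  "qform n A z = (\<Sum>i<n. \<Sum>j<n. cnj (z i) * A i j * z j)"

definition orthonormal_on :: "nat \<Rightarrow> nat set \<Rightarrow> (nat \<Rightarrow> nat \<Rightarrow> complex) \<Rightarrow> bool" where
  "orthonormal_on n I u \<longleftrightarrow> (\<forall>k\<in>I. \<forall>l\<in>I. cinner n (u k) (u l) = (if k = l then 1 else 0))"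

definition is_svd :: "nat \<Rightarrow> (nat \<Rightarrow> nat \<Rightarrow> complex) \<Rightarrow> (nat \<Rightarrow> real) \<Rightarrow>
    (nat \<Rightarrow> nat \<Rightarrow> complex) \<Rightarrow> (nat \<Rightarrow> nat \<Rightarrow> complex) \<Rightarrow> bool" where
  "is_svd n Q \<sigma> v w \<longleftrightarrow>
     (\<forall>k\<in>{1..n}. \<sigma> k \<ge> 0) \<and> (\<forall>k\<in>{1..<n}. \<sigma> (k+1) \<le> \<sigma> k) \<and>
     orthonormal_on n {1..n} v \<and> orthonormal_on n {1..n} w \<and>
     (\<forall>i<n. \<forall>j<n. Q i j = (\<Sum>k=1..n. complex_of_real (\<sigma> k) * v k i * cnj (w k j)))"

definition trunc_mat :: "nat \<Rightarrow> (nat \<Rightarrow> real) \<Rightarrow> (nat \<Rightarrow> nat \<Rightarrow> complex) \<Rightarrow> nat \<Rightarrow> nat \<Rightarrow> complex" where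
  "trunc_mat r \<sigma> v = (\<lambda>i j. \<Sum>k=1..r. complex_of_real (\<sigma> k) * v k i * cnj (v k j))"

definition eig_mat :: "nat \<Rightarrow> (nat \<Rightarrow> real) \<Rightarrow> (nat \<Rightarrow> nat \<Rightarrow> complex) \<Rightarrow> nat \<Rightarrow> nat \<Rightarrow> complex" where
  "eig_mat rs lam u = (\<lambda>i j. \<Sum>k=1..rs. complex_of_real (lam k) * u k i * cnj (u k j))"

definition delta_star :: "(nat \<Rightarrow> real) \<Rightarrow> nat \<Rightarrow> real" where
  "delta_star lam r = Min ({\<bar>lam j - lam (j+1)\<bar> | j. j \<in> {1..<r}} \<union> {lam r})"

text \<open>OPT(A) = max over z in A_K^n of z^dagger A z (real for Hermitian A).\<close>
definition OPT :: "nat \<Rightarrow> nat \<Rightarrow> (nat \<Rightarrow> nat \<Rightarrow> complex) \<Rightarrow> real" where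
  "OPT K n A = Max ((\<lambda>z. Re (qform n A z)) ` AKn K n)"

end

theory Submission
  imports Defs
begin

definition lc :: "nat set \<Rightarrow> (nat \<Rightarrow> complex) \<Rightarrow> (nat \<Rightarrow> nat \<Rightarrow> complex) \<Rightarrow> nat \<Rightarrow> complex" where
  "lc I c u = (\<lambda>i. \<Sum>k\<in>I. c k * u k i)"

definition adjm :: "(nat \<Rightarrow> nat \<Rightarrow> complex) \<Rightarrow> nat \<Rightarrow> nat \<Rightarrow> complex" where
  "adjm A = (\<lambda>i j. cnj (A j i))"

lemma cinner_add_right: "cinner n x (\<lambda>i. y i + z i) = cinner n x y + cinner n x z"
  by (simp add: cinner_def distrib_left sum.distrib)
lemma cinner_diff_right: "cinner n x (\<lambda>i. y i - z i) = cinner n x y - cinner n x z"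
  by (simp add: cinner_def right_diff_distrib sum_subtractf)
lemma cinner_scale_right: "cinner n x (\<lambda>i. c * y i) = c * cinner n x y"
  by (simp add: cinner_def sum_distrib_left algebra_simps)
lemma cinner_sum_right: "cinner n x (\<lambda>i. \<Sum>k\<in>I. f k i) = (\<Sum>k\<in>I. cinner n x (f k))"
  by (simp add: cinner_def sum_distrib_left sum.swap[of _ I])
lemma cinner_cnj: "cnj (cinner n x y) = cinner n y x"
  by (simp add: cinner_def mult.commute)
lemma cinner_add_left: "cinner n (\<lambda>i. y i + z i) x = cinner n y x + cinner n z x"
  by (simp add: cinner_def distrib_right sum.distrib)
lemma cinner_diff_left: "cinner n (\<lambda>i. y i - z i) x = cinner n y x - cinner n z x"
  by (simp add: cinner_def left_diff_distrib sum_subtractf)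
lemma cinner_scale_left: "cinner n (\<lambda>i. c * y i) x = cnj c * cinner n y x"
  by (simp add: cinner_def sum_distrib_left algebra_simps)
lemma cinner_sum_left: "cinner n (\<lambda>i. \<Sum>k\<in>I. f k i) x = (\<Sum>k\<in>I. cinner n (f k) x)"
  by (simp add: cinner_def sum_distrib_right sum.swap[of _ I])

lemma cinner_cong: "(\<And>i. i < n \<Longrightarrow> x i = x' i) \<Longrightarrow> (\<And>i. i < n \<Longrightarrow> y i = y' i) \<Longrightarrow>
   cinner n x y = cinner n x' y'"
  by (simp add: cinner_def)
lemma vnorm_cong: "(\<And>i. i < n \<Longrightarrow> x i = x' i) \<Longrightarrow> vnorm n x = vnorm n x'"
  by (simp add: vnorm_def)

lemma vnorm_nonneg: "vnorm n x \<ge> 0"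
proof -
  have "0 \<le> (\<Sum>i<n. (cmod (x i))\<^sup>2)" by (rule sum_nonneg) simp
  then show ?thesis unfolding vnorm_def by simp
qed
lemma vnorm_sq: "(vnorm n x)\<^sup>2 = (\<Sum>i<n. (cmod (x i))\<^sup>2)"
proof -
  have "0 \<le> (\<Sum>i<n. (cmod (x i))\<^sup>2)" by (rule sum_nonneg) simp
  then show ?thesis unfolding vnorm_def by (rule real_sqrt_pow2)
qed

lemma cnj_mult_self: "cnj z * z = complex_of_real ((cmod z)\<^sup>2)"
  by (metis complex_norm_square mult.commute of_real_power)
lemma mult_cnj_self: "z * cnj z = complex_of_real ((cmod z)\<^sup>2)"
  by (metis complex_norm_square of_real_power)
lemma Re_cinner_swap: "Re (cinner n y x) = Re (cinner n x y)"
proof -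
  have "cinner n y x = cnj (cinner n x y)" by (simp add: cinner_cnj)
  then show ?thesis by simp
qed

lemma cinner_self: "cinner n x x = complex_of_real ((vnorm n x)\<^sup>2)"
proof -
  have "cinner n x x = (\<Sum>i<n. complex_of_real ((cmod (x i))\<^sup>2))"
    unfolding cinner_def by (rule sum.cong) (rule refl, rule cnj_mult_self)
  then show ?thesis by (simp add: vnorm_sq)
qed
lemma Re_cinner_self: "Re (cinner n x x) = (vnorm n x)\<^sup>2"
  by (simp add: cinner_self)

lemma vnorm_L2: "vnorm n x = L2_set (\<lambda>i. cmod (x i)) {..<n}"
  by (simp add: vnorm_def L2_set_def)

lemma cauchy_schwarz: "cmod (cinner n x y) \<le> vnorm n x * vnorm n y"
proof -
  have "cmod (cinner n x y) \<le> (\<Sum>i<n. cmod (cnj (x i) * y i))"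
    unfolding cinner_def by (rule norm_sum)
  also have "\<dots> = (\<Sum>i<n. \<bar>cmod (x i)\<bar> * \<bar>cmod (y i)\<bar>)" by (simp add: norm_mult)
  also have "\<dots> \<le> L2_set (\<lambda>i. cmod (x i)) {..<n} * L2_set (\<lambda>i. cmod (y i)) {..<n}"
    by (rule L2_set_mult_ineq)
  finally show ?thesis by (simp add: vnorm_L2)
qed

lemma vnorm_sq_add: "(vnorm n (\<lambda>i. x i + y i))\<^sup>2 = (vnorm n x)\<^sup>2 + 2 * Re (cinner n x y) + (vnorm n y)\<^sup>2"
proof -
  have "(vnorm n (\<lambda>i. x i + y i))\<^sup>2 = Re (cinner n (\<lambda>i. x i + y i) (\<lambda>i. x i + y i))"
    by (simp add: Re_cinner_self)
  also have "\<dots> = Re (cinner n x x) + Re (cinner n x y) + Re (cinner n y x) + Re (cinner n y y)"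
    by (simp add: cinner_add_left cinner_add_right)
  also have "Re (cinner n y x) = Re (cinner n x y)"
    by (rule Re_cinner_swap)
  finally show ?thesis by (simp add: Re_cinner_self)
qed

lemma vnorm_sq_diff: "(vnorm n (\<lambda>i. x i - y i))\<^sup>2 = (vnorm n x)\<^sup>2 - 2 * Re (cinner n x y) + (vnorm n y)\<^sup>2"
proof -
  have "(vnorm n (\<lambda>i. x i - y i))\<^sup>2 = Re (cinner n (\<lambda>i. x i - y i) (\<lambda>i. x i - y i))"
    by (simp add: Re_cinner_self)
  also have "\<dots> = Re (cinner n x x) - Re (cinner n x y) - Re (cinner n y x) + Re (cinner n y y)"
    by (simp add: cinner_diff_left cinner_diff_right)
  also have "Re (cinner n y x) = Re (cinner n x y)"
    by (rule Re_cinner_swap)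
  finally show ?thesis by (simp add: Re_cinner_self)
qed

lemma vnorm_triangle: "vnorm n (\<lambda>i. x i + y i) \<le> vnorm n x + vnorm n y"
proof -
  have "Re (cinner n x y) \<le> vnorm n x * vnorm n y"
    using cauchy_schwarz[of n x y] complex_Re_le_cmod[of "cinner n x y"] by linarith
  then have "(vnorm n (\<lambda>i. x i + y i))\<^sup>2 \<le> (vnorm n x + vnorm n y)\<^sup>2"
    by (simp add: vnorm_sq_add power2_sum)
  then show ?thesis
    by (rule power2_le_imp_le) (simp add: vnorm_nonneg add_nonneg_nonneg)
qed

lemma vnorm_scale: "vnorm n (\<lambda>i. c * x i) = cmod c * vnorm n x"
proof -
  have "(vnorm n (\<lambda>i. c * x i))\<^sup>2 = (cmod c * vnorm n x)\<^sup>2"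
    by (simp add: vnorm_sq norm_mult power_mult_distrib sum_distrib_left)
  then show ?thesis
    by (rule power2_eq_imp_eq) (simp_all add: vnorm_nonneg)
qed

lemma vnorm_triangle_diff: "vnorm n (\<lambda>i. x i - y i) \<le> vnorm n x + vnorm n y"
  using vnorm_triangle[of n x "\<lambda>i. - y i"] vnorm_scale[of n "-1" y] by simp

lemma vnorm_rev_triangle: "vnorm n x - vnorm n y \<le> vnorm n (\<lambda>i. x i + y i)"
  using vnorm_triangle_diff[of n "\<lambda>i. x i + y i" y] by simp

lemma vnorm_rev_triangle_diff: "vnorm n x - vnorm n y \<le> vnorm n (\<lambda>i. x i - y i)"
  using vnorm_triangle[of n "\<lambda>i. x i - y i" y] by simp

lemma vnorm_eq_0: "vnorm n x = 0 \<longleftrightarrow> (\<forall>i<n. x i = 0)"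
proof -
  have "vnorm n x = 0 \<longleftrightarrow> (\<Sum>i<n. (cmod (x i))\<^sup>2) = 0"
    by (simp add: vnorm_def sum_nonneg)
  also have "\<dots> \<longleftrightarrow> (\<forall>i<n. x i = 0)"
    by (subst sum_nonneg_eq_0_iff) auto
  finally show ?thesis .
qed

lemma orthonormal_subset: "orthonormal_on n J u \<Longrightarrow> I \<subseteq> J \<Longrightarrow> orthonormal_on n I u"
  unfolding orthonormal_on_def by blast

lemma cinner_lc: assumes "orthonormal_on n J u" "I \<subseteq> J" "finite I" "j \<in> J"
  shows "cinner n (u j) (lc I c u) = (if j \<in> I then c j else 0)"
proof -
  have "cinner n (u j) (lc I c u) = (\<Sum>k\<in>I. c k * cinner n (u j) (u k))"
    unfolding lc_def by (simp add: cinner_sum_right cinner_scale_right)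
  also have "\<dots> = (\<Sum>k\<in>I. if k = j then c k else 0)"
    using assms by (intro sum.cong) (auto simp: orthonormal_on_def)
  also have "\<dots> = (if j \<in> I then c j else 0)"
    using assms(3) by (simp add: sum.delta')
  finally show ?thesis .
qed

lemma cinner_lc_left: assumes "orthonormal_on n J u" "I \<subseteq> J" "finite I" "j \<in> J"
  shows "cinner n (lc I c u) (u j) = (if j \<in> I then cnj (c j) else 0)"
  using cinner_lc[OF assms, of c] cinner_cnj[of n "u j" "lc I c u"] by (metis complex_cnj_zero)

lemma vnorm_lc: assumes "orthonormal_on n I u" "finite I"
  shows "(vnorm n (lc I c u))\<^sup>2 = (\<Sum>k\<in>I. (cmod (c k))\<^sup>2)"
proof -
  have "cinner n (lc I c u) (lc I c u) = (\<Sum>k\<in>I. cnj (c k) * cinner n (u k) (lc I c u))"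
    by (simp add: lc_def cinner_sum_left cinner_scale_left)
  also have "\<dots> = (\<Sum>k\<in>I. cnj (c k) * c k)"
    using assms by (intro sum.cong) (auto simp: cinner_lc)
  also have "\<dots> = (\<Sum>k\<in>I. complex_of_real ((cmod (c k))\<^sup>2))"
    by (intro sum.cong) (auto simp: cnj_mult_self)
  finally have "complex_of_real ((vnorm n (lc I c u))\<^sup>2) = complex_of_real (\<Sum>k\<in>I. (cmod (c k))\<^sup>2)"
    by (simp add: cinner_self)
  then show ?thesis using of_real_eq_iff by blast
qed

lemma bessel: assumes "orthonormal_on n I u" "finite I"
  shows "(\<Sum>k\<in>I. (cmod (cinner n (u k) x))\<^sup>2) \<le> (vnorm n x)\<^sup>2"
proof -
  define c where "c = (\<lambda>k. cinner n (u k) x)"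
  define p where "p = lc I c u"
  have "cinner n p x = (\<Sum>k\<in>I. cnj (c k) * c k)"
    by (simp add: p_def lc_def cinner_sum_left cinner_scale_left c_def)
  also have "\<dots> = (\<Sum>k\<in>I. complex_of_real ((cmod (c k))\<^sup>2))"
    by (intro sum.cong) (auto simp: cnj_mult_self)
  finally have "Re (cinner n p x) = (\<Sum>k\<in>I. (cmod (c k))\<^sup>2)" by simp
  moreover have "(vnorm n p)\<^sup>2 = (\<Sum>k\<in>I. (cmod (c k))\<^sup>2)"
    using vnorm_lc[OF assms] p_def by simp
  moreover have "0 \<le> (vnorm n (\<lambda>i. x i - p i))\<^sup>2" by simp
  moreover have "Re (cinner n x p) = Re (cinner n p x)"
    by (rule Re_cinner_swap)
  ultimately show ?thesis
    unfolding vnorm_sq_diff c_def by linarith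
qed

lemma mulv_cong: "(\<And>j. j < n \<Longrightarrow> x j = x' j) \<Longrightarrow> mulv n A x = mulv n A x'"
  by (simp add: mulv_def)

lemma mulv_add_mat: "mulv n (\<lambda>i j. A i j + B i j) x = (\<lambda>i. mulv n A x i + mulv n B x i)"
  by (simp add: mulv_def distrib_right sum.distrib)

lemma mulv_add: "mulv n A (\<lambda>i. x i + y i) = (\<lambda>i. mulv n A x i + mulv n A y i)"
  by (simp add: mulv_def distrib_left sum.distrib)
lemma mulv_diff: "mulv n A (\<lambda>i. x i - y i) = (\<lambda>i. mulv n A x i - mulv n A y i)"
  by (simp add: mulv_def right_diff_distrib sum_subtractf)
lemma mulv_scale: "mulv n A (\<lambda>i. c * x i) = (\<lambda>i. c * mulv n A x i)"
  by (simp add: mulv_def sum_distrib_left algebra_simps)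
lemma mulv_lc: "mulv n A (lc I c u) = lc I c (\<lambda>k. mulv n A (u k))"
  by (simp add: mulv_def lc_def sum_distrib_left sum.swap[of _ I] algebra_simps)

lemma adjm_adjm [simp]: "adjm (adjm A) = A"
  by (simp add: adjm_def)

lemma cinner_adj: "cinner n x (mulv n A y) = cinner n (mulv n (adjm A) x) y"
proof -
  have "cinner n x (mulv n A y) = (\<Sum>i<n. \<Sum>j<n. cnj (x i) * A i j * y j)"
    by (simp add: cinner_def mulv_def sum_distrib_left mult.assoc)
  also have "\<dots> = (\<Sum>j<n. \<Sum>i<n. cnj (x i) * A i j * y j)"
    by (rule sum.swap)
  also have "\<dots> = cinner n (mulv n (adjm A) x) y"
    by (simp add: cinner_def mulv_def adjm_def sum_distrib_right sum_distrib_left mult.commute mult.left_commute)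
  finally show ?thesis .
qed

lemma qform_cinner: "qform n A z = cinner n z (mulv n A z)"
  by (simp add: qform_def cinner_def mulv_def sum_distrib_left algebra_simps)

lemma mulv_row: "mulv n A x i = cinner n (\<lambda>j. cnj (A i j)) x"
  by (simp add: mulv_def cinner_def)

lemma mulv_crude: "vnorm n (mulv n A x) \<le> sqrt (\<Sum>i<n. (vnorm n (\<lambda>j. cnj (A i j)))\<^sup>2) * vnorm n x"
proof -
  have "(vnorm n (mulv n A x))\<^sup>2 = (\<Sum>i<n. (cmod (mulv n A x i))\<^sup>2)" by (rule vnorm_sq)
  also have "\<dots> \<le> (\<Sum>i<n. (vnorm n (\<lambda>j. cnj (A i j)) * vnorm n x)\<^sup>2)"
  proof (rule sum_mono)
    fix i show "(cmod (mulv n A x i))\<^sup>2 \<le> (vnorm n (\<lambda>j. cnj (A i j)) * vnorm n x)\<^sup>2"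
      unfolding mulv_row by (rule power_mono[OF cauchy_schwarz]) simp
  qed
  also have "\<dots> = (sqrt (\<Sum>i<n. (vnorm n (\<lambda>j. cnj (A i j)))\<^sup>2) * vnorm n x)\<^sup>2"
    by (simp add: power_mult_distrib sum_distrib_right sum_nonneg)
  finally show ?thesis
    by (rule power2_le_imp_le) (intro mult_nonneg_nonneg real_sqrt_ge_zero sum_nonneg vnorm_nonneg zero_le_power2)
qed

lemma spec_norm_bdd: "bdd_above {vnorm n (mulv n A x) | x. vnorm n x = 1}"
proof (rule bdd_aboveI)
  fix y assume "y \<in> {vnorm n (mulv n A x) | x. vnorm n x = 1}"
  then obtain x where "y = vnorm n (mulv n A x)" "vnorm n x = 1" by blast
  then show "y \<le> sqrt (\<Sum>i<n. (vnorm n (\<lambda>j. cnj (A i j)))\<^sup>2)" using mulv_crude[of n A x] by simp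
qed

lemma vnorm_zero_vec: "vnorm n (\<lambda>i. 0) = 0" by (simp add: vnorm_def)

lemma mulv_zero_if: "vnorm n x = 0 \<Longrightarrow> vnorm n (mulv n A x) = 0"
proof -
  assume "vnorm n x = 0"
  then have "\<forall>j<n. x j = 0" by (simp add: vnorm_eq_0)
  then have "mulv n A x = mulv n A (\<lambda>_. 0)" by (intro mulv_cong) auto
  then show ?thesis by (simp add: mulv_def vnorm_zero_vec)
qed

lemma spec_norm_bound: "vnorm n (mulv n A x) \<le> spec_norm n A * vnorm n x"
proof (cases "vnorm n x = 0")
  case True then show ?thesis using mulv_zero_if by simp
next
  case False
  then have pos: "vnorm n x > 0" using vnorm_nonneg[of n x] by simp
  define y where "y = (\<lambda>i. complex_of_real (1 / vnorm n x) * x i)"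
  have "vnorm n y = cmod (complex_of_real (1 / vnorm n x)) * vnorm n x" unfolding y_def by (rule vnorm_scale)
  then have "vnorm n y = 1" using pos by (simp add: norm_divide)
  then have "vnorm n (mulv n A y) \<le> spec_norm n A"
    unfolding spec_norm_def by (intro cSup_upper spec_norm_bdd) blast
  moreover have "vnorm n (mulv n A y) = vnorm n (mulv n A x) / vnorm n x"
    using pos unfolding y_def mulv_scale vnorm_scale by (simp add: norm_divide)
  ultimately show ?thesis using pos by (simp add: divide_le_eq mult.commute)
qed

lemma spec_norm_nonneg: assumes "n \<ge> 1" shows "spec_norm n A \<ge> 0"
proof -
  define e where "e = (\<lambda>i::nat. if i = 0 then (1::complex) else 0)"
  have eq: "\<And>i. (cmod (e i))\<^sup>2 = (if i = 0 then 1 else 0)" by (auto simp: e_def)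
  have "(vnorm n e)\<^sup>2 = 1"
    using assms unfolding vnorm_sq eq by (simp add: sum.delta')
  then have "vnorm n e = 1" using vnorm_nonneg[of n e]
    by (metis abs_of_nonneg power2_eq_1_iff abs_1 real_sqrt_abs real_sqrt_one)
  then have "vnorm n (mulv n A e) \<le> spec_norm n A"
    unfolding spec_norm_def by (intro cSup_upper spec_norm_bdd) blast
  then show ?thesis using vnorm_nonneg[of n "mulv n A e"] by linarith
qed

lemma spec_norm_adj: assumes "spec_norm n A \<ge> 0"
  shows "vnorm n (mulv n (adjm A) x) \<le> spec_norm n A * vnorm n x"
proof -
  define y where "y = mulv n (adjm A) x"
  have "(vnorm n y)\<^sup>2 = Re (cinner n y (mulv n (adjm A) x))"
    by (simp add: y_def Re_cinner_self)
  also have "\<dots> = Re (cinner n (mulv n A y) x)"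
    by (simp add: cinner_adj)
  also have "\<dots> \<le> vnorm n (mulv n A y) * vnorm n x"
    using cauchy_schwarz[of n "mulv n A y" x] complex_Re_le_cmod by (meson order_trans)
  also have "\<dots> \<le> spec_norm n A * vnorm n y * vnorm n x"
    by (intro mult_right_mono spec_norm_bound vnorm_nonneg)
  finally have *: "(vnorm n y)\<^sup>2 \<le> vnorm n y * (spec_norm n A * vnorm n x)" by (simp add: algebra_simps)
  show ?thesis
  proof (cases "vnorm n y = 0")
    case True then show ?thesis using assms vnorm_nonneg[of n x] unfolding y_def by simp
  next
    case False
    then have "vnorm n y > 0" using vnorm_nonneg[of n y] by simp
    with * show ?thesis unfolding y_def power2_eq_square by simp
  qed
qed

lemma homog_system:
  fixes a :: "nat \<Rightarrow> nat \<Rightarrow> complex"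
  assumes "finite R" "finite J" "card R < card J"
  shows "\<exists>c. (\<exists>j\<in>J. c j \<noteq> 0) \<and> (\<forall>i\<in>R. (\<Sum>j\<in>J. a i j * c j) = 0)"
  using assms
proof (induction R arbitrary: J a rule: finite_induct)
  case empty
  then obtain j0 where "j0 \<in> J" by fastforce
  then show ?case by (intro exI[of _ "\<lambda>j. if j = j0 then 1 else 0"]) auto
next
  case (insert i0 R)
  show ?case
  proof (cases "\<forall>j\<in>J. a i0 j = 0")
    case True
    have "card R < card J" using insert by simp
    then obtain c where c: "\<exists>j\<in>J. c j \<noteq> 0" "\<forall>i\<in>R. (\<Sum>j\<in>J. a i j * c j) = 0"
      using insert.IH[OF insert.prems(1)] by blast
    then show ?thesis using True by (intro exI[of _ c]) auto
  next
    case False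
    then obtain j0 where j0: "j0 \<in> J" "a i0 j0 \<noteq> 0" by blast
    define J' where "J' = J - {j0}"
    have fJ': "finite J'" using insert by (simp add: J'_def)
    have cJ': "card R < card J'" using insert j0 by (simp add: J'_def)
    define a' where "a' = (\<lambda>i j. a i j - a i j0 * a i0 j / a i0 j0)"
    obtain c' where c': "\<exists>j\<in>J'. c' j \<noteq> 0" "\<forall>i\<in>R. (\<Sum>j\<in>J'. a' i j * c' j) = 0"
      using insert.IH[OF fJ' cJ'] by blast
    define S where "S = (\<lambda>i. \<Sum>j\<in>J'. a i j * c' j)"
    define c where "c = c'(j0 := - S i0 / a i0 j0)"
    have sumc: "(\<Sum>j\<in>J. a i j * c j) = a i j0 * c j0 + S i" for i
    proof -
      have "(\<Sum>j\<in>J. a i j * c j) = a i j0 * c j0 + (\<Sum>j\<in>J'. a i j * c j)"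
        unfolding J'_def using j0 insert by (simp add: sum.remove)
      also have "(\<Sum>j\<in>J'. a i j * c j) = S i"
        unfolding S_def c_def J'_def by (intro sum.cong) auto
      finally show ?thesis .
    qed
    have "\<forall>i\<in>insert i0 R. (\<Sum>j\<in>J. a i j * c j) = 0"
    proof
      fix i assume "i \<in> insert i0 R"
      then consider "i = i0" | "i \<in> R" by blast
      then show "(\<Sum>j\<in>J. a i j * c j) = 0"
      proof cases
        case 1 then show ?thesis unfolding sumc using j0 by (simp add: c_def)
      next
        case 2
        have "0 = (\<Sum>j\<in>J'. a' i j * c' j)" using c' 2 by simp
        also have "\<dots> = S i - a i j0 / a i0 j0 * S i0"
          by (simp add: a'_def S_def left_diff_distrib sum_subtractf sum_distrib_left algebra_simps)
        finally show ?thesis unfolding sumc using j0 by (simp add: c_def algebra_simps)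
      qed
    qed
    moreover have "\<exists>j\<in>J. c j \<noteq> 0"
      using c' by (auto simp: c_def J'_def)
    ultimately show ?thesis by blast
  qed
qed

definition sph :: "nat set \<Rightarrow> (nat \<Rightarrow> complex) set" where
  "sph I = {g. (\<forall>k. k \<notin> I \<longrightarrow> g k = 0) \<and> (\<Sum>k\<in>I. (cmod (g k))\<^sup>2) = 1}"

lemma compact_sph:
  assumes "finite I"
  shows "compact (sph I)"
proof -
  let ?S = "\<lambda>k. if k \<in> I then cball (0::complex) 1 else {0}"
  have c1: "compact (Pi\<^sub>E UNIV ?S)"
  proof -
    have "compactin (product_topology (\<lambda>_. euclidean) UNIV) (Pi\<^sub>E UNIV ?S)"
      by (subst compactin_PiE) auto
    then show ?thesis by (simp add: euclidean_product_topology)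
  qed
  have c2: "closed (sph I)"
  proof -
    have e: "sph I = (\<Inter>k\<in>-I. {g. g k = 0}) \<inter> {g. (\<Sum>k\<in>I. (cmod (g k))\<^sup>2) = 1}"
      by (auto simp: sph_def)
    have "closed {g::nat\<Rightarrow>complex. g k = 0}" for k
      by (intro closed_Collect_eq continuous_on_const continuous_on_product_coordinates)
    moreover have "closed {g::nat\<Rightarrow>complex. (\<Sum>k\<in>I. (cmod (g k))\<^sup>2) = 1}"
      by (intro closed_Collect_eq continuous_intros continuous_on_product_coordinates)
    ultimately show ?thesis unfolding e by auto
  qed
  have sub: "sph I \<subseteq> Pi\<^sub>E UNIV ?S"
  proof
    fix g :: "nat \<Rightarrow> complex" assume g: "g \<in> sph I"
    have "cmod (g k) \<le> 1" if "k \<in> I" for k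
    proof -
      have "(cmod (g k))\<^sup>2 \<le> (\<Sum>k\<in>I. (cmod (g k))\<^sup>2)"
        by (rule member_le_sum) (use that assms in auto)
      then have "(cmod (g k))\<^sup>2 \<le> 1\<^sup>2" using g by (simp add: sph_def)
      then show ?thesis by (rule power2_le_imp_le) simp
    qed
    then show "g \<in> Pi\<^sub>E UNIV ?S" using g by (auto simp: PiE_def sph_def)
  qed
  have "compact (Pi\<^sub>E UNIV ?S \<inter> sph I)"
    by (rule compact_Int_closed[OF c1 c2])
  moreover have "Pi\<^sub>E UNIV ?S \<inter> sph I = sph I"
    using sub by blast
  ultimately show ?thesis by simp
qed

lemma sph_nonempty: assumes "k0 \<in> I" "finite I" shows "(\<lambda>k. if k = k0 then 1 else 0) \<in> sph I"
proof -
  have eq: "\<And>i. (cmod (if i = k0 then 1 else 0::complex))\<^sup>2 = (if i = k0 then 1 else 0)" by auto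
  show ?thesis using assms unfolding sph_def by (auto simp only: eq sum.delta' mem_Collect_eq) auto
qed

lemma exists_max_sph:
  fixes d :: "nat \<Rightarrow> nat \<Rightarrow> complex"
  assumes "finite I" "I \<noteq> {}"
  shows "\<exists>y\<in>sph I. \<forall>g\<in>sph I. vnorm n (lc I g d) \<le> vnorm n (lc I y d)"
proof -
  have "continuous_on (sph I) (\<lambda>g. vnorm n (lc I g d))"
    unfolding vnorm_def lc_def
    by (intro continuous_intros continuous_on_subset[OF continuous_on_product_coordinates]) auto
  moreover have "sph I \<noteq> {}" using sph_nonempty assms by blast
  ultimately show ?thesis
    using continuous_attains_sup[OF compact_sph[OF assms(1)]] by blast
qed

lemma vnorm_unit: assumes "orthonormal_on n I u" "k \<in> I" shows "vnorm n (u k) = 1"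
proof -
  have "cinner n (u k) (u k) = 1" using assms by (auto simp: orthonormal_on_def)
  then have "(vnorm n (u k))\<^sup>2 = 1" using Re_cinner_self[of n "u k"] by simp
  then show ?thesis using vnorm_nonneg[of n "u k"] by (simp add: power2_eq_1_iff)
qed

lemma lc_cong: "(\<And>k. k \<in> I \<Longrightarrow> c k = c' k) \<Longrightarrow> lc I c u = lc I c' u"
  by (simp add: lc_def)

lemma lc_lin: "lc I (\<lambda>k. g k + t * e k) d = (\<lambda>i. lc I g d i + t * lc I e d i)"
  by (simp add: lc_def distrib_right sum.distrib sum_distrib_left algebra_simps)

lemma cinner_lc_right_gen: "cinner n x (lc I c u) = (\<Sum>k\<in>I. c k * cinner n x (u k))"
  by (simp add: lc_def cinner_sum_right cinner_scale_right)
lemma cinner_lc_left_gen: "cinner n (lc I c u) x = (\<Sum>k\<in>I. cnj (c k) * cinner n (u k) x)"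
  by (simp add: lc_def cinner_sum_left cinner_scale_left)

lemma sum_abs_mult_le_real: "(\<Sum>k\<in>I. cmod (a k) * cmod (b k)) \<le>
   sqrt (\<Sum>k\<in>I. (cmod (a k))\<^sup>2) * sqrt (\<Sum>k\<in>I. (cmod (b k))\<^sup>2)"
  using L2_set_mult_ineq[of "\<lambda>k. cmod (a k)" "\<lambda>k. cmod (b k)" I] by (simp add: L2_set_def)

lemma linear_ineq_zero:
  fixes a K :: real
  assumes "\<And>t::real. 2 * t * a \<le> t\<^sup>2 * K"
  shows "a = 0"
proof -
  define K' where "K' = \<bar>K\<bar> + 1"
  have K'pos: "K' > 0" by (simp add: K'_def)
  have "2 * (a / K') * a \<le> (a / K')\<^sup>2 * K" by (rule assms)
  also have "\<dots> \<le> (a / K')\<^sup>2 * K'" by (intro mult_left_mono) (auto simp: K'_def)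
  finally have "2 * a\<^sup>2 / K' \<le> a\<^sup>2 / K'" using K'pos by (simp add: power2_eq_square field_simps)
  then have "a\<^sup>2 \<le> 0" using K'pos by (simp add: divide_le_cancel)
  then show ?thesis by simp
qed

locale setting =
  fixes n rs r :: nat and lam :: "nat \<Rightarrow> real" and u H :: "nat \<Rightarrow> nat \<Rightarrow> complex"
    and \<sigma> :: "nat \<Rightarrow> real" and v w :: "nat \<Rightarrow> nat \<Rightarrow> complex"
  assumes rs_le: "rs \<le> n"
    and lam_pos: "\<forall>k\<in>{1..rs}. lam k > 0"
    and lam_mono: "\<forall>k\<in>{1..<rs}. lam (k+1) \<le> lam k"
    and lam_zero: "\<forall>k>rs. lam k = 0"
    and u_on: "orthonormal_on n {1..rs} u"
    and svd: "is_svd n (\<lambda>i j. eig_mat rs lam u i j + H i j) \<sigma> v w"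
    and r1: "1 \<le> r" and r_le: "r \<le> rs"
    and hle: "spec_norm n H \<le> delta_star lam r / 2"
begin

abbreviation "M \<equiv> eig_mat rs lam u"
abbreviation "Q \<equiv> (\<lambda>i j. eig_mat rs lam u i j + H i j)"
abbreviation "h \<equiv> spec_norm n H"

lemma n1: "n \<ge> 1" using r1 r_le rs_le by simp
lemma h_nonneg: "h \<ge> 0" using spec_norm_nonneg[OF n1] .

lemma lam_nonneg: "k \<ge> 1 \<Longrightarrow> lam k \<ge> 0"
  using lam_pos lam_zero by (cases "k \<le> rs") (auto simp: less_imp_le not_le)

lemma lam_step: "k \<ge> 1 \<Longrightarrow> lam (Suc k) \<le> lam k"
proof -
  assume k: "k \<ge> 1"
  show ?thesis
  proof (cases "k < rs")
    case True then show ?thesis using lam_mono k by auto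
  next
    case False then show ?thesis using lam_zero lam_nonneg[OF k] by simp
  qed
qed

lemma lam_anti: assumes "1 \<le> k" "k \<le> l" shows "lam l \<le> lam k"
  using assms(2)
proof (induction l rule: dec_induct)
  case base then show ?case by simp
next
  case (step m) then show ?case using lam_step[of m] assms(1) by linarith
qed

lemma svd_parts:
  "\<forall>k\<in>{1..n}. \<sigma> k \<ge> 0" "\<forall>k\<in>{1..<n}. \<sigma> (k+1) \<le> \<sigma> k"
  "orthonormal_on n {1..n} v" "orthonormal_on n {1..n} w"
  "\<And>i j. i < n \<Longrightarrow> j < n \<Longrightarrow> Q i j = (\<Sum>k=1..n. complex_of_real (\<sigma> k) * v k i * cnj (w k j))"
  using svd unfolding is_svd_def by auto

lemma sigma_nonneg: "k \<in> {1..n} \<Longrightarrow> \<sigma> k \<ge> 0" using svd_parts(1) by auto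

lemma sigma_anti: assumes "1 \<le> k" "k \<le> l" "l \<le> n" shows "\<sigma> l \<le> \<sigma> k"
  using assms(2,3)
proof (induction l rule: dec_induct)
  case base then show ?case by simp
next
  case (step m)
  then have "m \<in> {1..<n}" using assms(1) by auto
  then have "\<sigma> (m+1) \<le> \<sigma> m" using svd_parts(2) by blast
  then show ?case using step by simp
qed

lemma M_herm: "adjm M = M"
  by (simp add: adjm_def eig_mat_def fun_eq_iff mult.commute mult.left_commute)

lemma mulv_M: "mulv n M x = lc {1..rs} (\<lambda>k. complex_of_real (lam k) * cinner n (u k) x) u"
proof (rule ext)
  fix i
  have "mulv n M x i = (\<Sum>j<n. \<Sum>k\<in>{1..rs}. complex_of_real (lam k) * u k i * cnj (u k j) * x j)"
    by (simp add: mulv_def eig_mat_def sum_distrib_right)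
  also have "\<dots> = (\<Sum>k\<in>{1..rs}. \<Sum>j<n. complex_of_real (lam k) * u k i * cnj (u k j) * x j)"
    by (rule sum.swap)
  also have "\<dots> = lc {1..rs} (\<lambda>k. complex_of_real (lam k) * cinner n (u k) x) u i"
    by (simp add: lc_def cinner_def sum_distrib_left sum_distrib_right mult.commute mult.left_commute)
  finally show "mulv n M x i = lc {1..rs} (\<lambda>k. complex_of_real (lam k) * cinner n (u k) x) u i" .
qed

lemma cinner_u_M: "k \<in> {1..rs} \<Longrightarrow> cinner n (u k) (mulv n M x) = complex_of_real (lam k) * cinner n (u k) x"
  unfolding mulv_M by (subst cinner_lc[OF u_on]) auto

lemma vnorm_M_sq: "(vnorm n (mulv n M x))\<^sup>2 = (\<Sum>k\<in>{1..rs}. (lam k)\<^sup>2 * (cmod (cinner n (u k) x))\<^sup>2)"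
  unfolding mulv_M by (subst vnorm_lc[OF u_on]) (auto simp: norm_mult power_mult_distrib)

lemma M_psd: "Re (cinner n x (mulv n M x)) \<ge> 0"
proof -
  have "cinner n x (mulv n M x) = (\<Sum>k\<in>{1..rs}. complex_of_real (lam k) * cinner n (u k) x * cinner n x (u k))"
    unfolding mulv_M cinner_lc_right_gen ..
  also have "\<dots> = (\<Sum>k\<in>{1..rs}. complex_of_real (lam k * (cmod (cinner n (u k) x))\<^sup>2))"
  proof (rule sum.cong)
    fix k
    have "cinner n x (u k) = cnj (cinner n (u k) x)" by (simp add: cinner_cnj)
    then show "complex_of_real (lam k) * cinner n (u k) x * cinner n x (u k) =
         complex_of_real (lam k * (cmod (cinner n (u k) x))\<^sup>2)"
      by (simp add: mult.assoc mult_cnj_self)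
  qed simp
  finally have "Re (cinner n x (mulv n M x)) = (\<Sum>k\<in>{1..rs}. lam k * (cmod (cinner n (u k) x))\<^sup>2)"
    by simp
  also have "\<dots> \<ge> 0" using lam_nonneg by (intro sum_nonneg mult_nonneg_nonneg) auto
  finally show ?thesis .
qed

lemma M_bound: "vnorm n (mulv n M x) \<le> lam 1 * vnorm n x"
proof -
  have "(vnorm n (mulv n M x))\<^sup>2 \<le> (\<Sum>k\<in>{1..rs}. (lam 1)\<^sup>2 * (cmod (cinner n (u k) x))\<^sup>2)"
    unfolding vnorm_M_sq
  proof (rule sum_mono)
    fix k assume k: "k \<in> {1..rs}"
    have "(lam k)\<^sup>2 \<le> (lam 1)\<^sup>2" using k lam_anti[of 1 k] lam_nonneg[of k] by (intro power_mono) auto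
    then show "(lam k)\<^sup>2 * (cmod (cinner n (u k) x))\<^sup>2 \<le> (lam 1)\<^sup>2 * (cmod (cinner n (u k) x))\<^sup>2"
      by (rule mult_right_mono) simp
  qed
  also have "\<dots> \<le> (lam 1)\<^sup>2 * (vnorm n x)\<^sup>2"
    unfolding sum_distrib_left[symmetric] by (intro mult_left_mono bessel[OF u_on]) auto
  finally have "(vnorm n (mulv n M x))\<^sup>2 \<le> (lam 1 * vnorm n x)\<^sup>2" by (simp add: power_mult_distrib)
  then show ?thesis
    by (rule power2_le_imp_le) (intro mult_nonneg_nonneg lam_nonneg vnorm_nonneg, simp)
qed

lemma Hadj_bound: "vnorm n (mulv n (adjm H) x) \<le> h * vnorm n x"
  using spec_norm_adj[OF h_nonneg] .

lemma mulv_Q: "mulv n Q x = (\<lambda>i. mulv n M x i + mulv n H x i)"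
  by (rule mulv_add_mat)

lemma mulv_Qadj: "mulv n (adjm Q) x = (\<lambda>i. mulv n M x i + mulv n (adjm H) x i)"
proof -
  have "adjm Q = (\<lambda>i j. adjm M i j + adjm H i j)" by (simp add: adjm_def fun_eq_iff)
  then show ?thesis using M_herm by (simp add: mulv_add_mat)
qed

lemma mulv_Q_svd: "i < n \<Longrightarrow> mulv n Q x i = lc {1..n} (\<lambda>k. complex_of_real (\<sigma> k) * cinner n (w k) x) v i"
proof -
  assume i: "i < n"
  have "mulv n Q x i = (\<Sum>j<n. (\<Sum>k=1..n. complex_of_real (\<sigma> k) * v k i * cnj (w k j)) * x j)"
    unfolding mulv_def by (intro sum.cong refl) (simp add: svd_parts(5)[OF i])
  also have "\<dots> = (\<Sum>j<n. \<Sum>k=1..n. complex_of_real (\<sigma> k) * v k i * cnj (w k j) * x j)"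
    by (simp add: sum_distrib_right)
  also have "\<dots> = (\<Sum>k=1..n. \<Sum>j<n. complex_of_real (\<sigma> k) * v k i * cnj (w k j) * x j)"
    by (rule sum.swap)
  also have "\<dots> = lc {1..n} (\<lambda>k. complex_of_real (\<sigma> k) * cinner n (w k) x) v i"
    by (simp add: lc_def cinner_def sum_distrib_left sum_distrib_right mult.commute mult.left_commute)
  finally show ?thesis .
qed

lemma mulv_Qadj_svd: "i < n \<Longrightarrow> mulv n (adjm Q) x i = lc {1..n} (\<lambda>k. complex_of_real (\<sigma> k) * cinner n (v k) x) w i"
proof -
  assume i: "i < n"
  have "mulv n (adjm Q) x i = (\<Sum>j<n. cnj (\<Sum>k=1..n. complex_of_real (\<sigma> k) * v k j * cnj (w k i)) * x j)"
    unfolding mulv_def adjm_def by (intro sum.cong refl) (simp add: svd_parts(5)[OF _ i])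
  also have "\<dots> = (\<Sum>j<n. \<Sum>k=1..n. complex_of_real (\<sigma> k) * cnj (v k j) * w k i * x j)"
    by (simp add: sum_distrib_right sum_distrib_left mult.commute mult.left_commute)
  also have "\<dots> = (\<Sum>k=1..n. \<Sum>j<n. complex_of_real (\<sigma> k) * cnj (v k j) * w k i * x j)"
    by (rule sum.swap)
  also have "\<dots> = lc {1..n} (\<lambda>k. complex_of_real (\<sigma> k) * cinner n (v k) x) w i"
    by (simp add: lc_def cinner_def sum_distrib_left sum_distrib_right mult.commute mult.left_commute)
  finally show ?thesis .
qed

lemma Q_w: assumes "k \<in> {1..n}" "i < n" shows "mulv n Q (w k) i = complex_of_real (\<sigma> k) * v k i"
proof -
  have "lc {1..n} (\<lambda>l. complex_of_real (\<sigma> l) * cinner n (w l) (w k)) v = lc {1..n} (\<lambda>l. if l = k then complex_of_real (\<sigma> l) else 0) v"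
    using svd_parts(4) assms(1) by (intro lc_cong) (auto simp: orthonormal_on_def)
  then have "lc {1..n} (\<lambda>l. complex_of_real (\<sigma> l) * cinner n (w l) (w k)) v i = lc {1..n} (\<lambda>l. if l = k then complex_of_real (\<sigma> l) else 0) v i"
    by simp
  also have "\<dots> = (\<Sum>l\<in>{1..n}. if l = k then complex_of_real (\<sigma> k) * v k i else 0)"
    unfolding lc_def by (intro sum.cong) auto
  also have "\<dots> = complex_of_real (\<sigma> k) * v k i"
    using assms(1) by (simp add: sum.delta)
  finally show ?thesis using mulv_Q_svd[OF assms(2)] by simp
qed

lemma Qadj_v: assumes "k \<in> {1..n}" "i < n" shows "mulv n (adjm Q) (v k) i = complex_of_real (\<sigma> k) * w k i"
proof -
  have "lc {1..n} (\<lambda>l. complex_of_real (\<sigma> l) * cinner n (v l) (v k)) w = lc {1..n} (\<lambda>l. if l = k then complex_of_real (\<sigma> l) else 0) w"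
    using svd_parts(3) assms(1) by (intro lc_cong) (auto simp: orthonormal_on_def)
  then have "lc {1..n} (\<lambda>l. complex_of_real (\<sigma> l) * cinner n (v l) (v k)) w i = lc {1..n} (\<lambda>l. if l = k then complex_of_real (\<sigma> l) else 0) w i"
    by simp
  also have "\<dots> = (\<Sum>l\<in>{1..n}. if l = k then complex_of_real (\<sigma> k) * w k i else 0)"
    unfolding lc_def by (intro sum.cong) auto
  also have "\<dots> = complex_of_real (\<sigma> k) * w k i"
    using assms(1) by (simp add: sum.delta)
  finally show ?thesis using mulv_Qadj_svd[OF assms(2)] by simp
qed

end

lemma sum_pos_witness: "finite J \<Longrightarrow> j \<in> J \<Longrightarrow> c j \<noteq> 0 \<Longrightarrow> (\<Sum>k\<in>J. (cmod (c k))\<^sup>2) > 0"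
proof -
  assume a: "finite J" "j \<in> J" "c j \<noteq> 0"
  have "(cmod (c j))\<^sup>2 \<le> (\<Sum>k\<in>J. (cmod (c k))\<^sup>2)" by (rule member_le_sum) (use a in auto)
  moreover have "(cmod (c j))\<^sup>2 > 0" using a by simp
  ultimately show ?thesis by linarith
qed

context setting begin

lemma sigma_le: assumes "k \<in> {1..n}" shows "\<sigma> k \<le> lam 1 + h"
proof -
  have "vnorm n (mulv n Q (w k)) = vnorm n (\<lambda>i. complex_of_real (\<sigma> k) * v k i)"
    using Q_w[OF assms] by (intro vnorm_cong) auto
  also have "\<dots> = \<sigma> k"
    using vnorm_unit[OF svd_parts(3) assms] sigma_nonneg[OF assms] by (simp add: vnorm_scale)
  finally have e: "vnorm n (mulv n Q (w k)) = \<sigma> k" .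
  have "vnorm n (mulv n Q (w k)) \<le> vnorm n (mulv n M (w k)) + vnorm n (mulv n H (w k))"
    unfolding mulv_Q by (rule vnorm_triangle)
  also have "\<dots> \<le> lam 1 * vnorm n (w k) + h * vnorm n (w k)"
    by (intro add_mono M_bound spec_norm_bound)
  finally show ?thesis using e vnorm_unit[OF svd_parts(4) assms] by simp
qed

lemma sigma_r_lower: "lam r - h \<le> \<sigma> r"
proof -
  have "card {1..<r} < card {1..r}" using r1 by simp
  then obtain c where c: "\<exists>j\<in>{1..r}. c j \<noteq> 0"
     "\<forall>i\<in>{1..<r}. (\<Sum>j\<in>{1..r}. cinner n (v i) (u j) * c j) = 0"
    using homog_system[of "{1..<r}" "{1..r}" "\<lambda>i j. cinner n (v i) (u j)"] by auto
  define x where "x = lc {1..r} c u"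
  have uJ: "orthonormal_on n {1..r} u" using orthonormal_subset[OF u_on] r_le by auto
  have orth: "cinner n (v i) x = 0" if "i \<in> {1..<r}" for i
    using c(2) that unfolding x_def cinner_lc_right_gen by (simp add: mult.commute)
  have nx: "(vnorm n x)\<^sup>2 = (\<Sum>k\<in>{1..r}. (cmod (c k))\<^sup>2)"
    unfolding x_def by (rule vnorm_lc[OF uJ]) simp
  have nxpos: "vnorm n x > 0"
  proof -
    obtain j where "j \<in> {1..r}" "c j \<noteq> 0" using c(1) by blast
    then have "(vnorm n x)\<^sup>2 > 0" unfolding nx by (intro sum_pos_witness) auto
    then show ?thesis using vnorm_nonneg[of n x] by (simp add: zero_less_power2)
  qed
  have ux: "cinner n (u k) x = (if k \<in> {1..r} then c k else 0)" if "k \<in> {1..rs}" for k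
    unfolding x_def using that r_le by (intro cinner_lc[OF u_on]) auto
  have "(lam r)\<^sup>2 * (vnorm n x)\<^sup>2 = (\<Sum>k\<in>{1..r}. (lam r)\<^sup>2 * (cmod (c k))\<^sup>2)"
    unfolding nx by (simp add: sum_distrib_left)
  also have "\<dots> \<le> (\<Sum>k\<in>{1..r}. (lam k)\<^sup>2 * (cmod (cinner n (u k) x))\<^sup>2)"
  proof (rule sum_mono)
    fix k assume k: "k \<in> {1..r}"
    have "lam r \<le> lam k" using k by (intro lam_anti) auto
    then have "(lam r)\<^sup>2 \<le> (lam k)\<^sup>2" using lam_nonneg[of r] r1 by (intro power_mono) auto
    moreover have "cinner n (u k) x = c k" using ux[of k] k r_le by auto
    ultimately show "(lam r)\<^sup>2 * (cmod (c k))\<^sup>2 \<le> (lam k)\<^sup>2 * (cmod (cinner n (u k) x))\<^sup>2"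
      by (simp add: mult_right_mono)
  qed
  also have "\<dots> \<le> (\<Sum>k\<in>{1..rs}. (lam k)\<^sup>2 * (cmod (cinner n (u k) x))\<^sup>2)"
    by (rule sum_mono2) (use r_le in auto)
  also have "\<dots> = (vnorm n (mulv n M x))\<^sup>2" by (rule vnorm_M_sq[symmetric])
  finally have "(lam r * vnorm n x)\<^sup>2 \<le> (vnorm n (mulv n M x))\<^sup>2" by (simp add: power_mult_distrib)
  then have Mlow: "lam r * vnorm n x \<le> vnorm n (mulv n M x)"
    by (rule power2_le_imp_le) (simp add: vnorm_nonneg)
  have sr: "\<sigma> r \<ge> 0" using sigma_nonneg[of r] r1 r_le rs_le by auto
  have "vnorm n (mulv n (adjm Q) x) = vnorm n (lc {1..n} (\<lambda>k. complex_of_real (\<sigma> k) * cinner n (v k) x) w)"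
    by (rule vnorm_cong) (rule mulv_Qadj_svd)
  then have "(vnorm n (mulv n (adjm Q) x))\<^sup>2 = (vnorm n (lc {1..n} (\<lambda>k. complex_of_real (\<sigma> k) * cinner n (v k) x) w))\<^sup>2"
    by simp
  also have "\<dots> = (\<Sum>k\<in>{1..n}. (cmod (complex_of_real (\<sigma> k) * cinner n (v k) x))\<^sup>2)"
    by (rule vnorm_lc[OF svd_parts(4)]) simp
  also have "\<dots> \<le> (\<Sum>k\<in>{1..n}. (\<sigma> r)\<^sup>2 * (cmod (cinner n (v k) x))\<^sup>2)"
  proof (rule sum_mono)
    fix k assume k: "k \<in> {1..n}"
    show "(cmod (complex_of_real (\<sigma> k) * cinner n (v k) x))\<^sup>2 \<le> (\<sigma> r)\<^sup>2 * (cmod (cinner n (v k) x))\<^sup>2"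
    proof (cases "k < r")
      case True then show ?thesis using orth[of k] k by simp
    next
      case False
      then have "\<sigma> k \<le> \<sigma> r" using k r1 by (intro sigma_anti) auto
      then have "(\<sigma> k)\<^sup>2 \<le> (\<sigma> r)\<^sup>2" using sigma_nonneg[OF k] by (intro power_mono) auto
      then show ?thesis by (simp add: norm_mult power_mult_distrib mult_right_mono)
    qed
  qed
  also have "\<dots> \<le> (\<sigma> r)\<^sup>2 * (vnorm n x)\<^sup>2"
    unfolding sum_distrib_left[symmetric] by (intro mult_left_mono bessel[OF svd_parts(3)]) auto
  finally have "(vnorm n (mulv n (adjm Q) x))\<^sup>2 \<le> (\<sigma> r * vnorm n x)\<^sup>2" by (simp add: power_mult_distrib)
  then have Qup: "vnorm n (mulv n (adjm Q) x) \<le> \<sigma> r * vnorm n x"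
    by (rule power2_le_imp_le) (simp add: vnorm_nonneg sr)
  have "vnorm n (mulv n M x) - vnorm n (mulv n (adjm H) x) \<le> vnorm n (mulv n (adjm Q) x)"
    unfolding mulv_Qadj by (rule vnorm_rev_triangle)
  then have "lam r * vnorm n x - h * vnorm n x \<le> \<sigma> r * vnorm n x"
    using Mlow Qup Hadj_bound[of x] by linarith
  then have "(lam r - h) * vnorm n x \<le> \<sigma> r * vnorm n x" by (simp add: algebra_simps)
  then show ?thesis using nxpos by simp
qed

lemma sigma_r1_upper: assumes rn: "r < n" shows "\<sigma> (r+1) \<le> lam (r+1) + h"
proof -
  have "card {1..r} < card {1..r+1}" by simp
  then obtain c where c: "\<exists>j\<in>{1..r+1}. c j \<noteq> 0"
     "\<forall>i\<in>{1..r}. (\<Sum>j\<in>{1..r+1}. cinner n (u i) (w j) * c j) = 0"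
    using homog_system[of "{1..r}" "{1..r+1}" "\<lambda>i j. cinner n (u i) (w j)"] by auto
  define x where "x = lc {1..r+1} c w"
  have wJ: "orthonormal_on n {1..r+1} w" using orthonormal_subset[OF svd_parts(4)] rn by auto
  have orth: "cinner n (u i) x = 0" if "i \<in> {1..r}" for i
    using c(2) that unfolding x_def cinner_lc_right_gen by (simp add: mult.commute)
  have nx: "(vnorm n x)\<^sup>2 = (\<Sum>k\<in>{1..r+1}. (cmod (c k))\<^sup>2)"
    unfolding x_def by (rule vnorm_lc[OF wJ]) simp
  have nxpos: "vnorm n x > 0"
  proof -
    obtain j where "j \<in> {1..r+1}" "c j \<noteq> 0" using c(1) by blast
    then have "(vnorm n x)\<^sup>2 > 0" unfolding nx by (intro sum_pos_witness) auto
    then show ?thesis using vnorm_nonneg[of n x] by (simp add: zero_less_power2)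
  qed
  have wx: "cinner n (w k) x = (if k \<in> {1..r+1} then c k else 0)" if "k \<in> {1..n}" for k
    unfolding x_def using that rn by (intro cinner_lc[OF svd_parts(4)]) auto
  have s1: "\<sigma> (r+1) \<ge> 0" using sigma_nonneg[of "r+1"] rn by auto
  have "(\<sigma> (r+1))\<^sup>2 * (vnorm n x)\<^sup>2 = (\<Sum>k\<in>{1..r+1}. (\<sigma> (r+1))\<^sup>2 * (cmod (c k))\<^sup>2)"
    unfolding nx by (rule sum_distrib_left)
  also have "\<dots> \<le> (\<Sum>k\<in>{1..r+1}. (cmod (complex_of_real (\<sigma> k) * cinner n (w k) x))\<^sup>2)"
  proof (rule sum_mono)
    fix k assume k: "k \<in> {1..r+1}"
    have "\<sigma> (r+1) \<le> \<sigma> k" using k rn by (intro sigma_anti) auto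
    then have "(\<sigma> (r+1))\<^sup>2 \<le> (\<sigma> k)\<^sup>2" using s1 by (intro power_mono) auto
    moreover have "cinner n (w k) x = c k" using wx[of k] k rn by auto
    ultimately show "(\<sigma> (r+1))\<^sup>2 * (cmod (c k))\<^sup>2 \<le> (cmod (complex_of_real (\<sigma> k) * cinner n (w k) x))\<^sup>2"
      by (simp add: norm_mult power_mult_distrib mult_right_mono)
  qed
  also have "\<dots> \<le> (\<Sum>k\<in>{1..n}. (cmod (complex_of_real (\<sigma> k) * cinner n (w k) x))\<^sup>2)"
    by (rule sum_mono2) (use rn in auto)
  also have "\<dots> = (vnorm n (lc {1..n} (\<lambda>k. complex_of_real (\<sigma> k) * cinner n (w k) x) v))\<^sup>2"
    by (rule vnorm_lc[OF svd_parts(3), symmetric]) simp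
  also have "\<dots> = (vnorm n (mulv n Q x))\<^sup>2"
  proof -
    have "vnorm n (mulv n Q x) = vnorm n (lc {1..n} (\<lambda>k. complex_of_real (\<sigma> k) * cinner n (w k) x) v)"
      by (rule vnorm_cong) (rule mulv_Q_svd)
    then show ?thesis by simp
  qed
  finally have "(\<sigma> (r+1) * vnorm n x)\<^sup>2 \<le> (vnorm n (mulv n Q x))\<^sup>2" by (simp add: power_mult_distrib)
  then have Qlow: "\<sigma> (r+1) * vnorm n x \<le> vnorm n (mulv n Q x)"
    by (rule power2_le_imp_le) (simp add: vnorm_nonneg)
  have l1: "lam (r+1) \<ge> 0" using lam_nonneg by simp
  have "(vnorm n (mulv n M x))\<^sup>2 = (\<Sum>k\<in>{1..rs}. (lam k)\<^sup>2 * (cmod (cinner n (u k) x))\<^sup>2)"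
    by (rule vnorm_M_sq)
  also have "\<dots> \<le> (\<Sum>k\<in>{1..rs}. (lam (r+1))\<^sup>2 * (cmod (cinner n (u k) x))\<^sup>2)"
  proof (rule sum_mono)
    fix k assume k: "k \<in> {1..rs}"
    show "(lam k)\<^sup>2 * (cmod (cinner n (u k) x))\<^sup>2 \<le> (lam (r+1))\<^sup>2 * (cmod (cinner n (u k) x))\<^sup>2"
    proof (cases "k \<le> r")
      case True then show ?thesis using orth[of k] k by simp
    next
      case False
      then have "lam k \<le> lam (r+1)" by (intro lam_anti) auto
      then have "(lam k)\<^sup>2 \<le> (lam (r+1))\<^sup>2" using lam_nonneg[of k] k by (intro power_mono) auto
      then show ?thesis by (simp add: mult_right_mono)
    qed
  qed
  also have "\<dots> \<le> (lam (r+1))\<^sup>2 * (vnorm n x)\<^sup>2"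
    unfolding sum_distrib_left[symmetric] by (intro mult_left_mono bessel[OF u_on]) auto
  finally have "(vnorm n (mulv n M x))\<^sup>2 \<le> (lam (r+1) * vnorm n x)\<^sup>2" by (simp add: power_mult_distrib)
  then have Mup: "vnorm n (mulv n M x) \<le> lam (r+1) * vnorm n x"
    by (rule power2_le_imp_le) (use l1 vnorm_nonneg[of n x] in simp)
  have "vnorm n (mulv n Q x) \<le> vnorm n (mulv n M x) + vnorm n (mulv n H x)"
    unfolding mulv_Q by (rule vnorm_triangle)
  then have "\<sigma> (r+1) * vnorm n x \<le> lam (r+1) * vnorm n x + h * vnorm n x"
    using Qlow Mup spec_norm_bound[of n H x] by linarith
  then have "\<sigma> (r+1) * vnorm n x \<le> (lam (r+1) + h) * vnorm n x" by (simp add: algebra_simps)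
  then show ?thesis using nxpos by simp
qed

end

lemma vnorm_sq_add_scaled: "(vnorm n (\<lambda>i. a i + complex_of_real t * b i))\<^sup>2 =
   (vnorm n a)\<^sup>2 + 2 * t * Re (cinner n a b) + t\<^sup>2 * (vnorm n b)\<^sup>2"
  by (simp add: vnorm_sq_add cinner_scale_right vnorm_scale power_mult_distrib)

context setting begin

lemma sylv_rel: assumes k: "k \<in> {1..r}" and i: "i < n"
  shows "mulv n M (\<lambda>i. w k i - v k i) i + complex_of_real (\<sigma> k) * (w k i - v k i)
       = mulv n (adjm H) (v k) i - mulv n H (w k) i"
proof -
  have kn: "k \<in> {1..n}" using k r_le rs_le by auto
  have a: "mulv n M (w k) i + mulv n H (w k) i = complex_of_real (\<sigma> k) * v k i"
    using Q_w[OF kn i] unfolding mulv_Q by simp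
  have b: "mulv n M (v k) i + mulv n (adjm H) (v k) i = complex_of_real (\<sigma> k) * w k i"
    using Qadj_v[OF kn i] unfolding mulv_Qadj by simp
  have a': "mulv n M (w k) i = complex_of_real (\<sigma> k) * v k i - mulv n H (w k) i"
    using a by (simp add: eq_diff_eq)
  have b': "mulv n M (v k) i = complex_of_real (\<sigma> k) * w k i - mulv n (adjm H) (v k) i"
    using b by (simp add: eq_diff_eq)
  show ?thesis unfolding mulv_diff a' b' by (simp add: algebra_simps)
qed

lemma lc_zero: "(\<And>k. k \<in> J \<Longrightarrow> g k = 0) \<Longrightarrow> lc J g d = (\<lambda>i. 0)"
  by (simp add: lc_def)

lemma sylv_bound:
  assumes sr: "\<sigma> r > 0"
  shows "vnorm n (lc {1..r} g (\<lambda>k i. w k i - v k i)) \<le> (2 * h / \<sigma> r) * sqrt (\<Sum>k\<in>{1..r}. (cmod (g k))\<^sup>2)"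
proof -
  define J where "J = {1..r}"
  define d where "d = (\<lambda>k i. w k i - v k i)"
  define f where "f = (\<lambda>k i. mulv n (adjm H) (v k) i - mulv n H (w k) i)"
  have fJ: "finite J" and neJ: "J \<noteq> {}" using r1 by (auto simp: J_def)
  obtain y where y: "y \<in> sph J" and ymax: "\<And>g. g \<in> sph J \<Longrightarrow> vnorm n (lc J g d) \<le> vnorm n (lc J y d)"
    using exists_max_sph[OF fJ neJ, of n d] by blast
  define s where "s = vnorm n (lc J y d)"
  have s0: "s \<ge> 0" by (simp add: s_def vnorm_nonneg)
  have y1: "(\<Sum>k\<in>J. (cmod (y k))\<^sup>2) = 1" using y by (simp add: sph_def)
  have HOM: "vnorm n (lc J g d) \<le> s * sqrt (\<Sum>k\<in>J. (cmod (g k))\<^sup>2)" for g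
  proof -
    define \<nu> where "\<nu> = sqrt (\<Sum>k\<in>J. (cmod (g k))\<^sup>2)"
    have nuge: "\<nu> \<ge> 0" by (simp add: \<nu>_def sum_nonneg)
    show ?thesis
    proof (cases "\<nu> = 0")
      case True
      then have "(\<Sum>k\<in>J. (cmod (g k))\<^sup>2) = 0" by (simp add: \<nu>_def sum_nonneg)
      then have "\<forall>k\<in>J. (cmod (g k))\<^sup>2 = 0" using fJ by (subst (asm) sum_nonneg_eq_0_iff) auto
      then have "lc J g d = (\<lambda>i. 0)" by (intro lc_zero) auto
      then show ?thesis using s0 nuge \<nu>_def by (simp add: vnorm_zero_vec)
    next
      case False
      then have nupos: "\<nu> > 0" using nuge by simp
      define g' where "g' = (\<lambda>k. if k \<in> J then g k / complex_of_real \<nu> else 0)"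
      have "(\<Sum>k\<in>J. (cmod (g' k))\<^sup>2) = (\<Sum>k\<in>J. (cmod (g k))\<^sup>2 / \<nu>\<^sup>2)"
        by (intro sum.cong) (auto simp: g'_def norm_divide power_divide)
      also have "\<dots> = (\<Sum>k\<in>J. (cmod (g k))\<^sup>2) / \<nu>\<^sup>2" by (simp add: sum_divide_distrib)
      also have "\<dots> = 1" using nupos by (simp add: \<nu>_def sum_nonneg)
      finally have "g' \<in> sph J" by (simp add: sph_def g'_def)
      then have le: "vnorm n (lc J g' d) \<le> s" using ymax s_def by blast
      have eqg: "lc J g' d = (\<lambda>i. complex_of_real (1 / \<nu>) * lc J g d i)"
        by (simp add: lc_def g'_def sum_distrib_left)
      have "vnorm n (lc J g' d) = cmod (complex_of_real (1 / \<nu>)) * vnorm n (lc J g d)"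
        unfolding eqg by (rule vnorm_scale)
      then have "vnorm n (lc J g' d) = vnorm n (lc J g d) / \<nu>"
        using nupos by (simp add: norm_divide)
      then show ?thesis using le nupos unfolding \<nu>_def[symmetric] by (simp add: divide_le_eq mult.commute)
    qed
  qed
  define e where "e = (\<lambda>k. complex_of_real (\<sigma> k) * y k)"
  define A where "A = Re (cinner n (lc J y d) (lc J e d))"
  define P where "P = (\<Sum>k\<in>J. \<sigma> k * (cmod (y k))\<^sup>2)"
  define P2 where "P2 = (\<Sum>k\<in>J. (\<sigma> k)\<^sup>2 * (cmod (y k))\<^sup>2)"
  define B where "B = (vnorm n (lc J e d))\<^sup>2"
  have var: "2 * t * (A - s\<^sup>2 * P) \<le> t\<^sup>2 * (s\<^sup>2 * P2 - B)" for t
  proof -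
    define gt where "gt = (\<lambda>k. y k + complex_of_real t * e k)"
    have "lc J gt d = (\<lambda>i. lc J y d i + complex_of_real t * lc J e d i)"
      unfolding gt_def by (rule lc_lin)
    then have L: "(vnorm n (lc J gt d))\<^sup>2 = s\<^sup>2 + 2 * t * A + t\<^sup>2 * B"
      by (simp add: vnorm_sq_add_scaled s_def A_def B_def)
    have "(\<Sum>k\<in>J. (cmod (gt k))\<^sup>2) = (\<Sum>k\<in>J. (cmod (y k))\<^sup>2 + 2 * t * (\<sigma> k * (cmod (y k))\<^sup>2) + t\<^sup>2 * ((\<sigma> k)\<^sup>2 * (cmod (y k))\<^sup>2))"
    proof (rule sum.cong)
      fix k
      have "gt k = complex_of_real (1 + t * \<sigma> k) * y k" by (simp add: gt_def e_def algebra_simps)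
      then have "(cmod (gt k))\<^sup>2 = (\<bar>1 + t * \<sigma> k\<bar> * cmod (y k))\<^sup>2"
        by (simp only: norm_mult norm_of_real)
      then have "(cmod (gt k))\<^sup>2 = (1 + t * \<sigma> k)\<^sup>2 * (cmod (y k))\<^sup>2"
        by (simp only: power_mult_distrib power2_abs)
      then show "(cmod (gt k))\<^sup>2 = (cmod (y k))\<^sup>2 + 2 * t * (\<sigma> k * (cmod (y k))\<^sup>2) + t\<^sup>2 * ((\<sigma> k)\<^sup>2 * (cmod (y k))\<^sup>2)"
        by (simp add: power2_sum power_mult_distrib algebra_simps)
    qed simp
    also have "\<dots> = 1 + 2 * t * P + t\<^sup>2 * P2"
      by (simp add: sum.distrib sum_distrib_left y1 P_def P2_def)
    finally have R: "(\<Sum>k\<in>J. (cmod (gt k))\<^sup>2) = 1 + 2 * t * P + t\<^sup>2 * P2" .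
    have "vnorm n (lc J gt d) \<le> s * sqrt (\<Sum>k\<in>J. (cmod (gt k))\<^sup>2)" by (rule HOM)
    then have "(vnorm n (lc J gt d))\<^sup>2 \<le> (s * sqrt (\<Sum>k\<in>J. (cmod (gt k))\<^sup>2))\<^sup>2"
      by (intro power_mono vnorm_nonneg)
    also have "\<dots> = s\<^sup>2 * (\<Sum>k\<in>J. (cmod (gt k))\<^sup>2)"
      by (simp add: power_mult_distrib sum_nonneg)
    finally have "s\<^sup>2 + 2 * t * A + t\<^sup>2 * B \<le> s\<^sup>2 * (1 + 2 * t * P + t\<^sup>2 * P2)" using L R by simp
    then show ?thesis by (simp add: algebra_simps)
  qed
  have AP: "A = s\<^sup>2 * P" using linear_ineq_zero[of "A - s\<^sup>2 * P" "s\<^sup>2 * P2 - B"] var by simp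
  have Pge: "P \<ge> \<sigma> r"
  proof -
    have "\<sigma> r = (\<Sum>k\<in>J. \<sigma> r * (cmod (y k))\<^sup>2)" by (simp add: sum_distrib_left[symmetric] y1)
    also have "\<dots> \<le> P" unfolding P_def
    proof (rule sum_mono)
      fix k assume "k \<in> J"
      then have "\<sigma> r \<le> \<sigma> k" using r_le rs_le by (intro sigma_anti) (auto simp: J_def)
      then show "\<sigma> r * (cmod (y k))\<^sup>2 \<le> \<sigma> k * (cmod (y k))\<^sup>2" by (simp add: mult_right_mono)
    qed
    finally show ?thesis .
  qed
  have rel: "mulv n M (lc J y d) i + lc J e d i = lc J y f i" if i: "i < n" for i
  proof -
    have "mulv n M (lc J y d) i + lc J e d i = (\<Sum>k\<in>J. y k * (mulv n M (d k) i + complex_of_real (\<sigma> k) * d k i))"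
    proof -
      have m: "mulv n M (lc J y d) i = (\<Sum>k\<in>J. y k * mulv n M (d k) i)"
        by (simp only: mulv_lc) (simp add: lc_def)
      have "lc J e d i = (\<Sum>k\<in>J. y k * (complex_of_real (\<sigma> k) * d k i))"
        unfolding lc_def e_def by (simp add: algebra_simps)
      with m show ?thesis by (simp add: sum.distrib[symmetric] distrib_left)
    qed
    also have "\<dots> = (\<Sum>k\<in>J. y k * f k i)"
      using sylv_rel i by (intro sum.cong refl) (simp add: d_def f_def J_def)
    finally show ?thesis by (simp add: lc_def)
  qed
  have "cinner n (lc J y d) (lc J y f) = cinner n (lc J y d) (\<lambda>i. mulv n M (lc J y d) i + lc J e d i)"
    using rel by (intro cinner_cong) auto
  also have "\<dots> = cinner n (lc J y d) (mulv n M (lc J y d)) + cinner n (lc J y d) (lc J e d)"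
    by (rule cinner_add_right)
  finally have "Re (cinner n (lc J y d) (lc J y f)) = Re (cinner n (lc J y d) (mulv n M (lc J y d))) + A"
    by (simp add: A_def)
  then have ReF: "Re (cinner n (lc J y d) (lc J y f)) \<ge> s\<^sup>2 * \<sigma> r"
    using M_psd[of "lc J y d"] AP Pge s0 by (smt (verit) mult_left_mono zero_le_power2)
  have vJ: "orthonormal_on n J v" and wJ: "orthonormal_on n J w"
    using orthonormal_subset[OF svd_parts(3)] orthonormal_subset[OF svd_parts(4)] r_le rs_le
    by (auto simp: J_def)
  have nv: "vnorm n (lc J y v) = 1"
    using vnorm_lc[OF vJ fJ, of y] y1 vnorm_nonneg[of n "lc J y v"] by (simp add: power2_eq_1_iff)
  have nw: "vnorm n (lc J y w) = 1"
    using vnorm_lc[OF wJ fJ, of y] y1 vnorm_nonneg[of n "lc J y w"] by (simp add: power2_eq_1_iff)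
  have "lc J y f = (\<lambda>i. mulv n (adjm H) (lc J y v) i - mulv n H (lc J y w) i)"
    by (simp only: mulv_lc) (simp add: f_def lc_def right_diff_distrib sum_subtractf)
  then have "vnorm n (lc J y f) \<le> h * vnorm n (lc J y v) + h * vnorm n (lc J y w)"
    using vnorm_triangle_diff[of n "mulv n (adjm H) (lc J y v)" "mulv n H (lc J y w)"]
      Hadj_bound[of "lc J y v"] spec_norm_bound[of n H "lc J y w"] by simp
  then have nF: "vnorm n (lc J y f) \<le> 2 * h" using nv nw by simp
  have "Re (cinner n (lc J y d) (lc J y f)) \<le> s * vnorm n (lc J y f)"
    using cauchy_schwarz[of n "lc J y d" "lc J y f"] complex_Re_le_cmod[of "cinner n (lc J y d) (lc J y f)"]
    unfolding s_def by linarith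
  also have "\<dots> \<le> s * (2 * h)" by (rule mult_left_mono[OF nF s0])
  finally have "s\<^sup>2 * \<sigma> r \<le> s * (2 * h)" using ReF by linarith
  then have ssr: "s * \<sigma> r \<le> 2 * h"
    using s0 h_nonneg by (cases "s = 0") (auto simp: power2_eq_square mult.assoc)
  then have sle: "s \<le> 2 * h / \<sigma> r" using sr by (simp add: le_divide_eq)
  have "vnorm n (lc J g d) \<le> s * sqrt (\<Sum>k\<in>J. (cmod (g k))\<^sup>2)" by (rule HOM)
  also have "\<dots> \<le> (2 * h / \<sigma> r) * sqrt (\<Sum>k\<in>J. (cmod (g k))\<^sup>2)"
    by (rule mult_right_mono[OF sle]) (simp add: sum_nonneg)
  finally show ?thesis by (simp add: J_def d_def)
qed

end

lemma mulv_trunc: "mulv n (trunc_mat r \<sigma> v) z = lc {1..r} (\<lambda>k. complex_of_real (\<sigma> k) * cinner n (v k) z) v"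
proof (rule ext)
  fix i
  have "mulv n (trunc_mat r \<sigma> v) z i = (\<Sum>j<n. \<Sum>k\<in>{1..r}. complex_of_real (\<sigma> k) * v k i * cnj (v k j) * z j)"
    by (simp add: mulv_def trunc_mat_def sum_distrib_right)
  also have "\<dots> = (\<Sum>k\<in>{1..r}. \<Sum>j<n. complex_of_real (\<sigma> k) * v k i * cnj (v k j) * z j)"
    by (rule sum.swap)
  also have "\<dots> = lc {1..r} (\<lambda>k. complex_of_real (\<sigma> k) * cinner n (v k) z) v i"
    by (simp add: lc_def cinner_def sum_distrib_left sum_distrib_right mult.commute mult.left_commute)
  finally show "mulv n (trunc_mat r \<sigma> v) z i = lc {1..r} (\<lambda>k. complex_of_real (\<sigma> k) * cinner n (v k) z) v i" .
qed

lemma sqrt_le_of_sq: assumes "S \<le> X\<^sup>2" "0 \<le> X" shows "sqrt S \<le> X"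
proof -
  have "sqrt S \<le> sqrt (X\<^sup>2)" using assms(1) by (rule real_sqrt_le_mono)
  then show ?thesis using assms(2) by simp
qed

context setting begin

lemma quad_diff:
  assumes sr: "\<sigma> r > 0"
  shows "\<bar>Re (qform n M z) - Re (qform n (trunc_mat r \<sigma> v) z)\<bar>
     \<le> (h + (lam 1 + h) * (2 * h / \<sigma> r) + (lam (r+1) + h)) * (vnorm n z)\<^sup>2"
proof -
  define a where "a = (\<lambda>k. cinner n (v k) z)"
  define b where "b = (\<lambda>k. cinner n (w k) z)"
  define J where "J = {1..r}"
  define T where "T = {r+1..n}"
  define d where "d = (\<lambda>k i. w k i - v k i)"
  define g where "g = (\<lambda>k. complex_of_real (\<sigma> k) * a k)"
  have rn: "r \<le> n" using r_le rs_le by simp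
  have cz: "cinner n z (v k) = cnj (a k)" for k by (simp add: a_def cinner_cnj)
  have qM: "qform n M z = cinner n z (mulv n Q z) - cinner n z (mulv n H z)"
    unfolding qform_cinner mulv_Q cinner_add_right by simp
  have "cinner n z (mulv n Q z) = cinner n z (lc {1..n} (\<lambda>k. complex_of_real (\<sigma> k) * b k) v)"
    unfolding b_def by (intro cinner_cong refl mulv_Q_svd)
  also have "\<dots> = (\<Sum>k\<in>{1..n}. complex_of_real (\<sigma> k) * b k * cnj (a k))"
    unfolding cinner_lc_right_gen cz ..
  also have "\<dots> = (\<Sum>k\<in>J. complex_of_real (\<sigma> k) * b k * cnj (a k)) + (\<Sum>k\<in>T. complex_of_real (\<sigma> k) * b k * cnj (a k))"
  proof -
    have "{1..n} = J \<union> T" using rn by (auto simp: J_def T_def)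
    moreover have "J \<inter> T = {}" by (auto simp: J_def T_def)
    ultimately show ?thesis by (simp add: sum.union_disjoint J_def T_def)
  qed
  finally have eQ: "cinner n z (mulv n Q z) = (\<Sum>k\<in>J. complex_of_real (\<sigma> k) * b k * cnj (a k)) + (\<Sum>k\<in>T. complex_of_real (\<sigma> k) * b k * cnj (a k))" .
  have eS: "qform n (trunc_mat r \<sigma> v) z = (\<Sum>k\<in>J. complex_of_real (\<sigma> k) * a k * cnj (a k))"
    unfolding qform_cinner mulv_trunc cinner_lc_right_gen cz a_def J_def ..
  have T1eq: "(\<Sum>k\<in>J. complex_of_real (\<sigma> k) * b k * cnj (a k)) - (\<Sum>k\<in>J. complex_of_real (\<sigma> k) * a k * cnj (a k))
      = cinner n (lc J g d) z"
  proof -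
    have "cinner n (lc J g d) z = (\<Sum>k\<in>J. cnj (g k) * cinner n (d k) z)" by (rule cinner_lc_left_gen)
    also have "\<dots> = (\<Sum>k\<in>J. complex_of_real (\<sigma> k) * b k * cnj (a k) - complex_of_real (\<sigma> k) * a k * cnj (a k))"
      by (intro sum.cong refl) (simp add: g_def d_def cinner_diff_left a_def b_def algebra_simps)
    finally show ?thesis by (simp add: sum_subtractf)
  qed
  have Delta: "qform n M z - qform n (trunc_mat r \<sigma> v) z =
      cinner n (lc J g d) z + (\<Sum>k\<in>T. complex_of_real (\<sigma> k) * b k * cnj (a k)) - cinner n z (mulv n H z)"
    unfolding qM eQ eS using T1eq by (simp add: algebra_simps)
  have vJ: "orthonormal_on n J v" using orthonormal_subset[OF svd_parts(3)] rn by (auto simp: J_def)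
  have vT: "orthonormal_on n T v" using orthonormal_subset[OF svd_parts(3)] by (auto simp: T_def)
  have wT: "orthonormal_on n T w" using orthonormal_subset[OF svd_parts(4)] by (auto simp: T_def)
  have hz: "cmod (cinner n z (mulv n H z)) \<le> h * (vnorm n z)\<^sup>2"
  proof -
    have "cmod (cinner n z (mulv n H z)) \<le> vnorm n z * vnorm n (mulv n H z)" by (rule cauchy_schwarz)
    also have "\<dots> \<le> vnorm n z * (h * vnorm n z)" by (intro mult_left_mono spec_norm_bound vnorm_nonneg)
    finally show ?thesis by (simp add: power2_eq_square algebra_simps)
  qed
  have l1h: "lam 1 + h \<ge> 0" using lam_nonneg[of 1] h_nonneg by simp
  have t1: "cmod (cinner n (lc J g d) z) \<le> (lam 1 + h) * (2 * h / \<sigma> r) * (vnorm n z)\<^sup>2"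
  proof -
    have "(\<Sum>k\<in>J. (cmod (g k))\<^sup>2) \<le> (\<Sum>k\<in>J. (lam 1 + h)\<^sup>2 * (cmod (a k))\<^sup>2)"
    proof (rule sum_mono)
      fix k assume k: "k \<in> J"
      then have kn: "k \<in> {1..n}" using rn by (auto simp: J_def)
      have "(\<sigma> k)\<^sup>2 \<le> (lam 1 + h)\<^sup>2" using sigma_le[OF kn] sigma_nonneg[OF kn] by (intro power_mono) auto
      then show "(cmod (g k))\<^sup>2 \<le> (lam 1 + h)\<^sup>2 * (cmod (a k))\<^sup>2"
        by (simp add: g_def norm_mult power_mult_distrib mult_right_mono)
    qed
    also have "\<dots> \<le> (lam 1 + h)\<^sup>2 * (vnorm n z)\<^sup>2"
      unfolding sum_distrib_left[symmetric] a_def by (intro mult_left_mono bessel[OF vJ]) (auto simp: J_def)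
    finally have "(\<Sum>k\<in>J. (cmod (g k))\<^sup>2) \<le> ((lam 1 + h) * vnorm n z)\<^sup>2" by (simp add: power_mult_distrib)
    then have "sqrt (\<Sum>k\<in>J. (cmod (g k))\<^sup>2) \<le> sqrt (((lam 1 + h) * vnorm n z)\<^sup>2)"
      by (rule real_sqrt_le_mono)
    then have sq: "sqrt (\<Sum>k\<in>J. (cmod (g k))\<^sup>2) \<le> (lam 1 + h) * vnorm n z"
      using l1h vnorm_nonneg[of n z] by simp
    have hs: "2 * h / \<sigma> r \<ge> 0" using h_nonneg sr by simp
    have "cmod (cinner n (lc J g d) z) \<le> vnorm n (lc J g d) * vnorm n z" by (rule cauchy_schwarz)
    also have "\<dots> \<le> ((2 * h / \<sigma> r) * sqrt (\<Sum>k\<in>J. (cmod (g k))\<^sup>2)) * vnorm n z"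
      unfolding J_def d_def by (intro mult_right_mono sylv_bound[OF sr] vnorm_nonneg)
    also have "\<dots> \<le> ((2 * h / \<sigma> r) * ((lam 1 + h) * vnorm n z)) * vnorm n z"
      by (intro mult_right_mono mult_left_mono sq hs vnorm_nonneg)
    also have "\<dots> = (lam 1 + h) * (2 * h / \<sigma> r) * (vnorm n z)\<^sup>2"
      by (simp add: power2_eq_square)
    finally show ?thesis .
  qed
  have t2: "cmod (\<Sum>k\<in>T. complex_of_real (\<sigma> k) * b k * cnj (a k)) \<le> (lam (r+1) + h) * (vnorm n z)\<^sup>2"
  proof -
    have "cmod (\<Sum>k\<in>T. complex_of_real (\<sigma> k) * b k * cnj (a k)) \<le> (\<Sum>k\<in>T. cmod (complex_of_real (\<sigma> k) * b k * cnj (a k)))"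
      by (rule norm_sum)
    also have "\<dots> \<le> (\<Sum>k\<in>T. (lam (r+1) + h) * (cmod (b k) * cmod (a k)))"
    proof (rule sum_mono)
      fix k assume k: "k \<in> T"
      then have kn: "k \<in> {1..n}" and rn': "r < n" by (auto simp: T_def)
      have "\<sigma> k \<le> \<sigma> (r+1)" using k by (intro sigma_anti) (auto simp: T_def)
      also have "\<dots> \<le> lam (r+1) + h" by (rule sigma_r1_upper[OF rn'])
      finally have "\<bar>\<sigma> k\<bar> \<le> lam (r+1) + h" using sigma_nonneg[OF kn] by simp
      then show "cmod (complex_of_real (\<sigma> k) * b k * cnj (a k)) \<le> (lam (r+1) + h) * (cmod (b k) * cmod (a k))"
        by (simp add: norm_mult mult.assoc mult_right_mono)
    qed
    also have "\<dots> = (lam (r+1) + h) * (\<Sum>k\<in>T. cmod (b k) * cmod (a k))" by (simp add: sum_distrib_left)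
    also have "\<dots> \<le> (lam (r+1) + h) * (vnorm n z * vnorm n z)"
    proof (rule mult_left_mono)
      have "(\<Sum>k\<in>T. cmod (b k) * cmod (a k)) \<le> sqrt (\<Sum>k\<in>T. (cmod (b k))\<^sup>2) * sqrt (\<Sum>k\<in>T. (cmod (a k))\<^sup>2)"
        by (rule sum_abs_mult_le_real)
      also have "\<dots> \<le> vnorm n z * vnorm n z"
      proof (intro mult_mono)
        show "sqrt (\<Sum>k\<in>T. (cmod (b k))\<^sup>2) \<le> vnorm n z"
          unfolding b_def by (rule sqrt_le_of_sq[OF bessel[OF wT] vnorm_nonneg]) (simp add: T_def)
        show "sqrt (\<Sum>k\<in>T. (cmod (a k))\<^sup>2) \<le> vnorm n z"
          unfolding a_def by (rule sqrt_le_of_sq[OF bessel[OF vT] vnorm_nonneg]) (simp add: T_def)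
      qed (auto intro!: sum_nonneg simp: vnorm_nonneg)
      finally show "(\<Sum>k\<in>T. cmod (b k) * cmod (a k)) \<le> vnorm n z * vnorm n z" .
      show "0 \<le> lam (r+1) + h" using lam_nonneg[of "r+1"] h_nonneg by simp
    qed
    finally show ?thesis by (simp add: power2_eq_square)
  qed
  define X where "X = cinner n (lc J g d) z"
  define Y where "Y = (\<Sum>k\<in>T. complex_of_real (\<sigma> k) * b k * cnj (a k))"
  define Z where "Z = cinner n z (mulv n H z)"
  have "\<bar>Re (qform n M z) - Re (qform n (trunc_mat r \<sigma> v) z)\<bar> = \<bar>Re (qform n M z - qform n (trunc_mat r \<sigma> v) z)\<bar>"
    by simp
  also have "\<dots> \<le> cmod (qform n M z - qform n (trunc_mat r \<sigma> v) z)"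
    by (rule abs_Re_le_cmod)
  also have "\<dots> = cmod (X + Y - Z)" unfolding Delta X_def Y_def Z_def ..
  also have "\<dots> \<le> cmod (X + Y) + cmod Z" by (rule norm_triangle_ineq4)
  also have "\<dots> \<le> cmod X + cmod Y + cmod Z" using norm_triangle_ineq[of X Y] by simp
  also have "\<dots> \<le> (lam 1 + h) * (2 * h / \<sigma> r) * (vnorm n z)\<^sup>2 + (lam (r+1) + h) * (vnorm n z)\<^sup>2 + h * (vnorm n z)\<^sup>2"
    using t1 t2 hz unfolding X_def Y_def Z_def by linarith
  finally show ?thesis by (simp add: algebra_simps)
qed

end

lemma roots_finite: "finite (roots_of_unity K)"
proof -
  have "roots_of_unity K = (\<lambda>k. cis (2 * pi * real k / real K)) ` {..<K}"
    by (auto simp: roots_of_unity_def)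
  then show ?thesis by simp
qed

lemma root_norm: "x \<in> roots_of_unity K \<Longrightarrow> cmod x = 1"
  by (auto simp: roots_of_unity_def)

lemma one_root: "K \<ge> 1 \<Longrightarrow> (1::complex) \<in> roots_of_unity K"
  unfolding roots_of_unity_def by (rule CollectI, rule exI[of _ 0]) auto

lemma AKn_finite: "finite (AKn K n)"
proof -
  let ?E = "\<lambda>f::nat \<Rightarrow> complex. \<lambda>i. if i < n then f i else 0"
  have "AKn K n \<subseteq> ?E ` (Pi\<^sub>E {..<n} (\<lambda>_. roots_of_unity K))"
  proof
    fix z assume z: "z \<in> AKn K n"
    have "restrict z {..<n} \<in> Pi\<^sub>E {..<n} (\<lambda>_. roots_of_unity K)" using z by (auto simp: AKn_def)
    moreover have "z = ?E (restrict z {..<n})" using z by (auto simp: AKn_def fun_eq_iff)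
    ultimately show "z \<in> ?E ` (Pi\<^sub>E {..<n} (\<lambda>_. roots_of_unity K))" by blast
  qed
  moreover have "finite (Pi\<^sub>E {..<n} (\<lambda>_. roots_of_unity K))"
    by (intro finite_PiE) (auto simp: roots_finite)
  ultimately show ?thesis by (meson finite_surj)
qed

lemma AKn_nonempty: "K \<ge> 1 \<Longrightarrow> (\<lambda>i. if i < n then 1 else 0) \<in> AKn K n"
  using one_root by (auto simp: AKn_def)

lemma AKn_norm: "z \<in> AKn K n \<Longrightarrow> (vnorm n z)\<^sup>2 = real n"
proof -
  assume z: "z \<in> AKn K n"
  have "(vnorm n z)\<^sup>2 = (\<Sum>i<n. (cmod (z i))\<^sup>2)" by (rule vnorm_sq)
  also have "\<dots> = (\<Sum>i<n. 1)" using z root_norm by (intro sum.cong) (auto simp: AKn_def)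
  finally show ?thesis by simp
qed

lemma final_arith:
  fixes h \<delta> lr l1 l2 sr :: real
  assumes "0 \<le> h" "h \<le> \<delta> / 2" "\<delta> \<le> lr" "lr \<le> l1" "0 < lr" "lr - h \<le> sr" "0 \<le> l2" "0 < sr"
  shows "2 * (h + (l1 + h) * (2 * h / sr) + (l2 + h)) \<le> 16 * (l2 + l1 / \<delta> * h)"
proof (cases "h = 0")
  case True then show ?thesis using assms by simp
next
  case False
  then have hpos: "h > 0" using assms by simp
  have dpos: "\<delta> > 0" using assms hpos by simp
  have srd: "sr \<ge> \<delta> / 2" using assms by simp
  have "2 * h / sr \<le> 2 * h / (\<delta> / 2)"
    using srd dpos hpos by (intro divide_left_mono) auto
  also have "\<dots> = 4 * h / \<delta>" by simp
  finally have q1: "2 * h / sr \<le> 4 * h / \<delta>" .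
  have l1h: "l1 + h \<le> 3 / 2 * l1" using assms by simp
  have X0: "l1 / \<delta> * h \<ge> h"
  proof -
    have "l1 / \<delta> \<ge> 1" using assms dpos by simp
    then have "1 * h \<le> l1 / \<delta> * h" using hpos by (intro mult_right_mono) auto
    then show ?thesis by simp
  qed
  have "(l1 + h) * (2 * h / sr) \<le> (3 / 2 * l1) * (4 * h / \<delta>)"
    using l1h q1 assms hpos dpos by (intro mult_mono) auto
  also have "\<dots> = 6 * (l1 / \<delta> * h)" by simp
  finally have P6: "(l1 + h) * (2 * h / sr) \<le> 6 * (l1 / \<delta> * h)" .
  have gen: "2 * (h + pp + (l2 + h)) \<le> 16 * (l2 + xx)" if "pp \<le> 6 * xx" "h \<le> xx" for pp xx :: real
    using that assms(7) by (simp add: algebra_simps)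
  show ?thesis by (rule gen[OF P6 X0])
qed

context setting begin

lemma delta_le: "delta_star lam r \<le> lam r"
proof -
  have "{\<bar>lam j - lam (j+1)\<bar> | j. j \<in> {1..<r}} = (\<lambda>j. \<bar>lam j - lam (j+1)\<bar>) ` {1..<r}" by auto
  then have "finite ({\<bar>lam j - lam (j+1)\<bar> | j. j \<in> {1..<r}} \<union> {lam r})" by simp
  then show ?thesis unfolding delta_star_def by (rule Min_le) simp
qed

lemma main_bound:
  assumes K2: "K \<ge> 2" and zr: "zr \<in> AKn K n"
    and opt: "\<forall>z\<in>AKn K n. Re (qform n (trunc_mat r \<sigma> v) z) \<le> Re (qform n (trunc_mat r \<sigma> v) zr)"
  shows "\<bar>OPT K n M - Re (qform n M zr)\<bar>
       \<le> 16 * (real n * (lam (r+1) + lam 1 / delta_star lam r * h))"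
proof -
  define F where "F = (\<lambda>z. Re (qform n M z)) ` AKn K n"
  have fF: "finite F" using AKn_finite by (simp add: F_def)
  have neF: "F \<noteq> {}" using AKn_nonempty[of K n] K2 by (auto simp: F_def)
  have "OPT K n M \<in> F" unfolding OPT_def F_def[symmetric] using fF neF by (rule Max_in)
  then obtain zs where zs: "zs \<in> AKn K n" and OPTe: "OPT K n M = Re (qform n M zs)" by (auto simp: F_def)
  have ge: "Re (qform n M zr) \<le> OPT K n M"
    unfolding OPT_def F_def[symmetric] using fF zr by (intro Max_ge) (auto simp: F_def)
  have lr: "lam r > 0" using lam_pos r1 r_le by auto
  have hd: "h \<le> delta_star lam r / 2" by (rule hle)
  have sr_low: "lam r - h \<le> \<sigma> r" by (rule sigma_r_lower)
  have srpos: "\<sigma> r > 0" using sr_low hd delta_le lr h_nonneg by linarith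
  define E where "E = h + (lam 1 + h) * (2 * h / \<sigma> r) + (lam (r+1) + h)"
  have d1: "\<bar>Re (qform n M zs) - Re (qform n (trunc_mat r \<sigma> v) zs)\<bar> \<le> E * real n"
    using quad_diff[OF srpos, of zs] AKn_norm[OF zs] by (simp add: E_def)
  have d2: "\<bar>Re (qform n M zr) - Re (qform n (trunc_mat r \<sigma> v) zr)\<bar> \<le> E * real n"
    using quad_diff[OF srpos, of zr] AKn_norm[OF zr] by (simp add: E_def)
  have o: "Re (qform n (trunc_mat r \<sigma> v) zs) \<le> Re (qform n (trunc_mat r \<sigma> v) zr)" using opt zs by blast
  have "\<bar>OPT K n M - Re (qform n M zr)\<bar> \<le> 2 * E * real n"
    using d1 d2 o ge OPTe by linarith
  also have "\<dots> = real n * (2 * E)" by simp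
  also have "\<dots> \<le> real n * (16 * (lam (r+1) + lam 1 / delta_star lam r * h))"
  proof (rule mult_left_mono)
    show "2 * E \<le> 16 * (lam (r+1) + lam 1 / delta_star lam r * h)"
      unfolding E_def
    proof (rule final_arith)
      show "0 \<le> h" by (rule h_nonneg)
      show "h \<le> delta_star lam r / 2" by (rule hle)
      show "delta_star lam r \<le> lam r" by (rule delta_le)
      show "lam r \<le> lam 1" using r1 by (intro lam_anti) auto
      show "0 < lam r" by (rule lr)
      show "lam r - h \<le> \<sigma> r" by (rule sr_low)
      show "0 \<le> lam (r+1)" by (rule lam_nonneg) simp
      show "0 < \<sigma> r" by (rule srpos)
    qed
  qed simp
  finally show ?thesis by (simp add: algebra_simps)
qed

end

theorem theorem3:
  shows "\<exists>C::real. \<forall>(n::nat) (K::nat) (rs::nat) (r::nat) (lam::nat \<Rightarrow> real)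
            (u::nat \<Rightarrow> nat \<Rightarrow> complex) (H::nat \<Rightarrow> nat \<Rightarrow> complex)
            (\<sigma>::nat \<Rightarrow> real) (v::nat \<Rightarrow> nat \<Rightarrow> complex) (w::nat \<Rightarrow> nat \<Rightarrow> complex)
            (zr::nat \<Rightarrow> complex).
     K \<ge> 2 \<and> rs \<le> n \<and>
     (\<forall>k\<in>{1..rs}. lam k > 0) \<and> (\<forall>k\<in>{1..<rs}. lam (k+1) \<le> lam k) \<and>
     (\<forall>k>rs. lam k = 0) \<and> orthonormal_on n {1..rs} u \<and>
     is_svd n (\<lambda>i j. eig_mat rs lam u i j + H i j) \<sigma> v w \<and>
     zr \<in> AKn K n \<and>
     (\<forall>z\<in>AKn K n. Re (qform n (trunc_mat r \<sigma> v) z) \<le> Re (qform n (trunc_mat r \<sigma> v) zr)) \<and>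
     1 \<le> r \<and> r \<le> rs \<and>
     spec_norm n H \<le> delta_star lam r / 2
     \<longrightarrow>
     \<bar>OPT K n (eig_mat rs lam u) - Re (qform n (eig_mat rs lam u) zr)\<bar>
       \<le> C * (real n * (lam (r+1) + lam 1 / delta_star lam r * spec_norm n H))"
proof (intro exI[of _ 16] allI impI)
  fix n K rs r :: nat and lam :: "nat \<Rightarrow> real" and u H :: "nat \<Rightarrow> nat \<Rightarrow> complex"
    and \<sigma> :: "nat \<Rightarrow> real" and v w :: "nat \<Rightarrow> nat \<Rightarrow> complex" and zr :: "nat \<Rightarrow> complex"
  assume A: "K \<ge> 2 \<and> rs \<le> n \<and>
     (\<forall>k\<in>{1..rs}. lam k > 0) \<and> (\<forall>k\<in>{1..<rs}. lam (k+1) \<le> lam k) \<and>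
     (\<forall>k>rs. lam k = 0) \<and> orthonormal_on n {1..rs} u \<and>
     is_svd n (\<lambda>i j. eig_mat rs lam u i j + H i j) \<sigma> v w \<and>
     zr \<in> AKn K n \<and>
     (\<forall>z\<in>AKn K n. Re (qform n (trunc_mat r \<sigma> v) z) \<le> Re (qform n (trunc_mat r \<sigma> v) zr)) \<and>
     1 \<le> r \<and> r \<le> rs \<and>
     spec_norm n H \<le> delta_star lam r / 2"
  interpret S: setting n rs r lam u H \<sigma> v w
    by unfold_locales (use A in blast)+
  show "\<bar>OPT K n (eig_mat rs lam u) - Re (qform n (eig_mat rs lam u) zr)\<bar>
       \<le> 16 * (real n * (lam (r+1) + lam 1 / delta_star lam r * spec_norm n H))"
    using S.main_bound A by blast
qed

end
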